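(* Let $(\mathbb{T}_n)$ be the sequence of dyadic partitions. (a) If $\bm f\in\mathscr{F}$, then $x_{\bm f}$ admits the continuous quadratic variation $\langle x_{\bm f}\rangle_t=\int_0^tf_\infty^2(s)\,ds$ for all $t\in[0,1]$. (b) If $\bm f,\bm g\in\mathscr{F}$, then $x_{\bm f}$ and $x_{\bm g}$ admit the continuous covariation $\langle x_{\bm f},x_{\bm g}\rangle_t=\int_0^tf_\infty(s)g_\infty(s)\,ds$ for all $t\in[0,1]$. In particular, $\{x_{\bm f}:\bm f\in\mathscr{F}\}$ is a vector space of functions admitting a continuous quadratic variation.
   Context: Dyadic partitions: $\mathbb{T}_n=\{k2^{-n}:k=0,\dots,2^n\}$. For $s\in\mathbb{T}_n$, $s'$ is the successor of $s$ in $\mathbb{T}_n$ ($s'=1$ if $s=1$). For $x,y\in C[0,1]$, $\langle x,y\rangle^n_t:=\sum_{s\in\mathbb{T}_n,\,s\le t}(x(s')-x(s))(y(s')-y(s))$, $\langle x\rangle^n_t:=\langle x,x\rangle^n_t$; the quadratic variation is $\langle x\rangle_t=\lim_n\langle x\rangle^n_t$ and the covariation is $\langle x,y\rangle_t=\lim_n\langle x,y\rangle^n_t$, whenever these limits exist. Faber--Schauder functions: $e_{0,0}(t)=\max\{0,\min\{t,1-t\}\}$, $e_{n,k}(t)=2^{-n/2}e_{0,0}(2^nt-k)$ for $n\ge1$, $k=0,\dots,2^n-1$. $\mathscr{F}$ is the class of sequences $\bm f=(f_n)_{n\ge0}$ of bounded functions $f_n:[0,1]\to\mathbb{R}$ converging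 uniformly to a Riemann integrable function $f_\infty$. For $\bm f\in\mathscr{F}$, $\theta_{n,k}(\bm f):=f_n(k2^{-n})$ and $x_{\bm f}:=\sum_{n=0}^\infty\sum_{k=0}^{2^n-1}\theta_{n,k}(\bm f)e_{n,k}$ (an absolutely convergent series defining a continuous function). *)

theory Defs
  imports "HOL-Analysis.Analysis"
begin

definition dyadic :: "nat \<Rightarrow> real set" where
  "dyadic n = {real k / 2 ^ n | k. k \<le> 2 ^ n}"

definition dsucc :: "nat \<Rightarrow> real \<Rightarrow> real" where
  "dsucc n s = min 1 (s + 1 / 2 ^ n)"

definition cov_n :: "nat \<Rightarrow> (real \<Rightarrow> real) \<Rightarrow> (real \<Rightarrow> real) \<Rightarrow> real \<Rightarrow> real" where
  "cov_n n x y t = (\<Sum>s\<in>{s \<in> dyadic n. s \<le> t}.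
      (x (dsucc n s) - x s) * (y (dsucc n s) - y s))"

definition qv_n :: "nat \<Rightarrow> (real \<Rightarrow> real) \<Rightarrow> real \<Rightarrow> real" where
  "qv_n n x t = cov_n n x x t"

definition e00 :: "real \<Rightarrow> real" where
  "e00 t = max 0 (min t (1 - t))"

definition fs :: "nat \<Rightarrow> nat \<Rightarrow> real \<Rightarrow> real" where
  "fs n k t = 2 powr (- real n / 2) * e00 (2 ^ n * t - real k)"

definition riemann_integrable_on :: "(real \<Rightarrow> real) \<Rightarrow> real \<Rightarrow> real \<Rightarrow> bool" where
  "riemann_integrable_on f a b \<longleftrightarrow> (\<exists>I. \<forall>\<epsilon>>0. \<exists>\<delta>>0. \<forall>D.
      D tagged_division_of {a..b} \<and> (\<lambda>x. ball x \<delta>) fine D \<longrightarrow>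
      \<bar>(\<Sum>(x,K)\<in>D. Henstock_Kurzweil_Integration.content K * f x) - I\<bar> < \<epsilon>)"

definition classF :: "(nat \<Rightarrow> real \<Rightarrow> real) \<Rightarrow> (real \<Rightarrow> real) \<Rightarrow> bool" where
  "classF f finf \<longleftrightarrow> (\<forall>n. bounded (f n ` {0..1})) \<and>
      uniform_limit {0..1} f finf sequentially \<and> riemann_integrable_on finf 0 1"

definition xF :: "(nat \<Rightarrow> real \<Rightarrow> real) \<Rightarrow> real \<Rightarrow> real" where
  "xF f t = (\<Sum>n. \<Sum>k<2 ^ n. f n (real k / 2 ^ n) * fs n k t)"

end

theory Submission
  imports Defs "HOL-Real_Asymp.Real_Asymp"
begin

definition Iv :: "nat \<Rightarrow> nat \<Rightarrow> real set" where
  "Iv n q = {real q / 2^n .. real (Suc q) / 2^n}"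

lemma dyadic_tagged:
  assumes x: "\<forall>q<2^n. x q \<in> Iv n q"
  shows "(\<lambda>q. (x q, Iv n q)) ` {..<2^n} tagged_division_of {0..1}"
proof (rule tagged_division_ofI)
  show "finite ((\<lambda>q. (x q, Iv n q)) ` {..<2^n})" by simp
  show "y \<in> K" if "(y, K) \<in> (\<lambda>q. (x q, Iv n q)) ` {..<2^n}" for y K
    using that x by auto
  show "K \<subseteq> {0..1}" if "(y, K) \<in> (\<lambda>q. (x q, Iv n q)) ` {..<2^n}" for y K
  proof -
    from that obtain q where q: "q < 2^n" "K = Iv n q" by auto
    have "real (Suc q) \<le> 2^n" using q(1)
      by (metis Suc_leI of_nat_le_iff of_nat_numeral of_nat_power)
    then have "real (Suc q) / 2^n \<le> 1" by simp
    then show ?thesis using q by (auto simp: Iv_def)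
  qed
  show "\<exists>a b. K = cbox a b" if "(y, K) \<in> (\<lambda>q. (x q, Iv n q)) ` {..<2^n}" for y K
    using that by (auto simp: Iv_def)
  show "interior K1 \<inter> interior K2 = {}"
    if "(x1, K1) \<in> (\<lambda>q. (x q, Iv n q)) ` {..<2^n}" "(x2, K2) \<in> (\<lambda>q. (x q, Iv n q)) ` {..<2^n}"
       "(x1, K1) \<noteq> (x2, K2)" for x1 K1 x2 K2
  proof -
    from that obtain q1 q2 where q: "K1 = Iv n q1" "K2 = Iv n q2" "q1 \<noteq> q2" by auto
    have *: "interior (Iv n q1) \<inter> interior (Iv n q2) = {}" if "q1 < q2" for q1 q2
    proof -
      have "real (Suc q1) \<le> real q2" using that by simp
      then have "real (Suc q1) / 2^n \<le> real q2 / 2^n" by (simp add: divide_right_mono)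
      then show ?thesis by (auto simp: Iv_def)
    qed
    show ?thesis using q * [of q1 q2] * [of q2 q1] by (cases "q1 < q2") auto
  qed
  show "\<Union>{K. \<exists>y. (y, K) \<in> (\<lambda>q. (x q, Iv n q)) ` {..<2^n}} = {0..1}"
  proof
    show "\<Union>{K. \<exists>y. (y, K) \<in> (\<lambda>q. (x q, Iv n q)) ` {..<2^n}} \<subseteq> {0..1}"
    proof
      fix y assume "y \<in> \<Union>{K. \<exists>y. (y, K) \<in> (\<lambda>q. (x q, Iv n q)) ` {..<2^n}}"
      then obtain q where q: "q < 2^n" "y \<in> Iv n q" by auto
      have "real (Suc q) \<le> 2^n" using q(1)
        by (metis Suc_leI of_nat_le_iff of_nat_numeral of_nat_power)
      then have "real (Suc q) / 2^n \<le> 1" by simp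
      moreover have "0 \<le> real q / 2^n" by simp
      moreover have "y \<le> real (Suc q) / 2^n" "real q / 2^n \<le> y" using q(2) unfolding Iv_def by auto
      ultimately show "y \<in> {0..1}" unfolding atLeastAtMost_iff by linarith
    qed
    show "{0..1} \<subseteq> \<Union>{K. \<exists>y. (y, K) \<in> (\<lambda>q. (x q, Iv n q)) ` {..<2^n}}"
    proof
      fix y :: real assume y: "y \<in> {0..1}"
      define q where "q = min (nat \<lfloor>y * 2^n\<rfloor>) (2^n - 1)"
      have "(2::nat)^n > 0" by simp
      then have q2: "q < 2^n" unfolding q_def by linarith
      have "q \<le> nat \<lfloor>y * 2^n\<rfloor>" unfolding q_def by simp
      then have "real q \<le> real (nat \<lfloor>y * 2^n\<rfloor>)" by simp
      also have "\<dots> \<le> y * 2^n" using y by simp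
      finally have "real q \<le> y * 2^n" .
      moreover have "y * 2^n \<le> real (Suc q)"
      proof (cases "nat \<lfloor>y * 2^n\<rfloor> \<le> 2^n - 1")
        case True
        then have "q = nat \<lfloor>y * 2^n\<rfloor>" unfolding q_def by simp
        then show ?thesis using y by simp linarith
      next
        case False
        then have "q = 2^n - 1" unfolding q_def by simp
        then have "real (Suc q) = 2^n" by simp
        then show ?thesis using y by simp
      qed
      ultimately have "y \<in> Iv n q" by (simp add: Iv_def field_simps)
      then show "y \<in> \<Union>{K. \<exists>y. (y, K) \<in> (\<lambda>q. (x q, Iv n q)) ` {..<2^n}}"
        using q2 by blast
    qed
  qed
qed

lemma dyadic_fine:
  assumes x: "\<forall>q<2^n. x q \<in> Iv n q" and "1 / 2^n < \<delta>"
  shows "(\<lambda>y. ball y \<delta>) fine ((\<lambda>q. (x q, Iv n q)) ` {..<2^n})"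
  unfolding fine_def
proof safe
  fix q z assume q: "q < (2::nat)^n" and z: "z \<in> Iv n q"
  have "x q \<in> Iv n q" using x q by auto
  moreover have "real (Suc q)/2^n = real q/2^n + 1/2^n" by (simp add: field_simps)
  ultimately have "\<bar>x q - z\<bar> \<le> 1/2^n" using z unfolding Iv_def atLeastAtMost_iff abs_le_iff
    by linarith
  then show "z \<in> ball (x q) \<delta>" using assms(2) by (simp add: dist_real_def)
qed

lemma dyadic_sum:
  "(\<Sum>(y,K)\<in>(\<lambda>q. (x q, Iv n q)) ` {..<2^n}. Henstock_Kurzweil_Integration.content K * h y) = (\<Sum>q<2^n. h (x q)) / 2^n"
proof -
  have inj: "inj_on (\<lambda>q. (x q, Iv n q)) {..<2^n}"
  proof (rule inj_onI)
    fix q1 q2 assume "(x q1, Iv n q1) = (x q2, Iv n q2)"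
    then have "Iv n q1 = Iv n q2" by simp
    moreover have "real q / 2^n \<le> real (Suc q) / 2^n" for q
      by (simp add: divide_right_mono)
    ultimately have "real q1 / 2^n = real q2 / 2^n" unfolding Iv_def Icc_eq_Icc
      by blast
    then show "q1 = q2" by simp
  qed
  have c: "Henstock_Kurzweil_Integration.content (Iv n q) = 1 / 2^n" for q
    by (simp add: Iv_def field_simps)
  show ?thesis
    by (simp add: sum.reindex[OF inj] c sum_divide_distrib)
qed

lemma pow_small:
  assumes "(\<delta>::real) > 0" shows "\<exists>N. \<forall>n\<ge>N. 1 / 2^n < \<delta>"
proof -
  obtain N where N: "(1/2::real)^N < \<delta>" using real_arch_pow_inv[OF assms, of "1/2"] by auto
  have "1 / 2^n < \<delta>" if "n \<ge> N" for n
  proof -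
    have "(2::real)^N \<le> 2^n" using that by (simp add: power_increasing)
    then have "1 / (2::real)^n \<le> 1 / 2^N" by (simp add: frac_le)
    also have "\<dots> = (1/2)^N" by (simp add: power_one_over)
    finally show ?thesis using N by linarith
  qed
  then show ?thesis by blast
qed

definition osc_small :: "(real \<Rightarrow> real) \<Rightarrow> bool" where
  "osc_small h \<longleftrightarrow> (\<forall>\<epsilon>>0. \<exists>N. \<forall>n\<ge>N. \<forall>x. (\<forall>q<2^n. x q \<in> Iv n q) \<longrightarrow>
      (\<Sum>q<2^n. \<bar>h (x q) - h (real q / 2^n)\<bar>) / 2^n < \<epsilon>)"

lemma left_in_Iv: "real q / 2^n \<in> Iv n q"
  by (simp add: Iv_def divide_right_mono)

lemma riemann_integrable:
  assumes "riemann_integrable_on h 0 1"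
  shows "h integrable_on {0..1}"
proof -
  from assms obtain I where I: "\<forall>\<epsilon>>0. \<exists>\<delta>>0. \<forall>D.
      D tagged_division_of {0..1} \<and> (\<lambda>x. ball x \<delta>) fine D \<longrightarrow>
      \<bar>(\<Sum>(x,K)\<in>D. Henstock_Kurzweil_Integration.content K * h x) - I\<bar> < \<epsilon>"
    unfolding riemann_integrable_on_def by blast
  have "(h has_integral I) {0..1}"
    unfolding has_integral_real
  proof (intro allI impI)
    fix e :: real assume "e > 0"
    with I obtain \<delta> where "\<delta> > 0" and d: "\<forall>D.
      D tagged_division_of {0..1} \<and> (\<lambda>x. ball x \<delta>) fine D \<longrightarrow>
      \<bar>(\<Sum>(x,K)\<in>D. Henstock_Kurzweil_Integration.content K * h x) - I\<bar> < e" by blast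
    show "\<exists>\<gamma>. gauge \<gamma> \<and> (\<forall>\<D>. \<D> tagged_division_of {0..1} \<and> \<gamma> fine \<D> \<longrightarrow>
        norm ((\<Sum>(x, k)\<in>\<D>. Henstock_Kurzweil_Integration.content k *\<^sub>R h x) - I) < e)"
      using d \<open>\<delta> > 0\<close> by (intro exI[of _ "\<lambda>x. ball x \<delta>"]) auto
  qed
  then show ?thesis by blast
qed

lemma riemann_osc:
  assumes "riemann_integrable_on h 0 1"
  shows "osc_small h"
  unfolding osc_small_def
proof (intro allI impI)
  fix \<epsilon> :: real assume "\<epsilon> > 0"
  from assms obtain I where I: "\<forall>\<epsilon>>0. \<exists>\<delta>>0. \<forall>D.
      D tagged_division_of {0..1} \<and> (\<lambda>x. ball x \<delta>) fine D \<longrightarrow>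
      \<bar>(\<Sum>(x,K)\<in>D. Henstock_Kurzweil_Integration.content K * h x) - I\<bar> < \<epsilon>"
    unfolding riemann_integrable_on_def by blast
  with \<open>\<epsilon> > 0\<close> obtain \<delta> where "\<delta> > 0" and d: "\<forall>D.
      D tagged_division_of {0..1} \<and> (\<lambda>x. ball x \<delta>) fine D \<longrightarrow>
      \<bar>(\<Sum>(x,K)\<in>D. Henstock_Kurzweil_Integration.content K * h x) - I\<bar> < \<epsilon>/4"
    by (metis divide_pos_pos zero_less_numeral)
  obtain N where N: "\<forall>n\<ge>N. 1 / 2^n < \<delta>" using pow_small[OF \<open>\<delta> > 0\<close>] by blast
  have S: "\<bar>(\<Sum>q<2^n. h (x q)) / 2^n - I\<bar> < \<epsilon>/4" if "n \<ge> N" "\<forall>q<2^n. x q \<in> Iv n q" for n x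
    using d dyadic_tagged[OF that(2)] dyadic_fine[OF that(2)] N that(1) dyadic_sum[where x=x and n=n and h=h]
    by auto
  show "\<exists>N. \<forall>n\<ge>N. \<forall>x. (\<forall>q<2^n. x q \<in> Iv n q) \<longrightarrow>
      (\<Sum>q<2^n. \<bar>h (x q) - h (real q / 2^n)\<bar>) / 2^n < \<epsilon>"
  proof (intro exI[of _ N] allI impI)
    fix n x assume n: "n \<ge> N" and x: "\<forall>q<(2::nat)^n. x q \<in> Iv n q"
    define l where "l q = real q / 2^n" for q
    define y where "y q = (if h (x q) \<ge> h (l q) then x q else l q)" for q
    define z where "z q = (if h (x q) \<ge> h (l q) then l q else x q)" for q
    have yI: "\<forall>q<2^n. y q \<in> Iv n q" using x left_in_Iv unfolding y_def l_def by auto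
    have zI: "\<forall>q<2^n. z q \<in> Iv n q" using x left_in_Iv unfolding z_def l_def by auto
    have eq: "\<bar>h (x q) - h (l q)\<bar> = h (y q) - h (z q)" for q
      unfolding y_def z_def by auto
    have "(\<Sum>q<2^n. \<bar>h (x q) - h (real q / 2^n)\<bar>) / 2^n
        = (\<Sum>q<2^n. h (y q)) / 2^n - (\<Sum>q<2^n. h (z q)) / 2^n"
      using eq by (simp add: l_def sum_subtractf diff_divide_distrib)
    also have "\<dots> < \<epsilon>"
      using S[OF n yI] S[OF n zI] \<open>\<epsilon> > 0\<close> by linarith
    finally show "(\<Sum>q<2^n. \<bar>h (x q) - h (real q / 2^n)\<bar>) / 2^n < \<epsilon>" .
  qed
qed

lemma Iv_sub: "q < 2^n \<Longrightarrow> Iv n q \<subseteq> {0..1}"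
proof -
  assume q: "q < 2^n"
  have "real (Suc q) \<le> 2^n" using q
    by (metis Suc_leI of_nat_le_iff of_nat_numeral of_nat_power)
  then have "real (Suc q) / 2^n \<le> 1" by simp
  moreover have "0 \<le> real q / 2^n" by simp
  ultimately show ?thesis unfolding Iv_def by auto
qed

lemma osc_small_mult:
  assumes f: "osc_small f" and g: "osc_small g" and M: "\<forall>x\<in>{0..1}. \<bar>f x\<bar> \<le> M \<and> \<bar>g x\<bar> \<le> M"
  shows "osc_small (\<lambda>x. f x * g x)"
  unfolding osc_small_def
proof (intro allI impI)
  fix \<epsilon> :: real assume e: "\<epsilon> > 0"
  have M0: "M \<ge> 0" using M by force
  define e' where "e' = \<epsilon> / (2 * M + 1)"
  have e': "e' > 0" using e M0 unfolding e'_def by simp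
  obtain N1 where N1: "\<forall>n\<ge>N1. \<forall>x. (\<forall>q<2^n. x q \<in> Iv n q) \<longrightarrow>
      (\<Sum>q<2^n. \<bar>f (x q) - f (real q / 2^n)\<bar>) / 2^n < e'"
    using f e' unfolding osc_small_def by blast
  obtain N2 where N2: "\<forall>n\<ge>N2. \<forall>x. (\<forall>q<2^n. x q \<in> Iv n q) \<longrightarrow>
      (\<Sum>q<2^n. \<bar>g (x q) - g (real q / 2^n)\<bar>) / 2^n < e'"
    using g e' unfolding osc_small_def by blast
  show "\<exists>N. \<forall>n\<ge>N. \<forall>x. (\<forall>q<2^n. x q \<in> Iv n q) \<longrightarrow>
      (\<Sum>q<2^n. \<bar>f (x q) * g (x q) - f (real q / 2^n) * g (real q / 2^n)\<bar>) / 2^n < \<epsilon>"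
  proof (intro exI[of _ "max N1 N2"] allI impI)
    fix n x assume n: "max N1 N2 \<le> n" and x: "\<forall>q<(2::nat)^n. x q \<in> Iv n q"
    have pt: "\<bar>f (x q) * g (x q) - f (real q / 2^n) * g (real q / 2^n)\<bar>
        \<le> M * \<bar>g (x q) - g (real q / 2^n)\<bar> + M * \<bar>f (x q) - f (real q / 2^n)\<bar>"
      if q: "q \<in> {..<2^n}" for q
    proof -
      have xi: "x q \<in> {0..1}" using x q Iv_sub[of q n] by blast
      have li: "real q / 2^n \<in> {0..1}" using left_in_Iv[of q n] q Iv_sub by auto
      have "f (x q) * g (x q) - f (real q / 2^n) * g (real q / 2^n)
          = f (x q) * (g (x q) - g (real q / 2^n)) + g (real q / 2^n) * (f (x q) - f (real q / 2^n))"
        by (simp add: algebra_simps)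
      then have "\<bar>f (x q) * g (x q) - f (real q / 2^n) * g (real q / 2^n)\<bar>
          \<le> \<bar>f (x q)\<bar> * \<bar>g (x q) - g (real q / 2^n)\<bar> + \<bar>g (real q / 2^n)\<bar> * \<bar>f (x q) - f (real q / 2^n)\<bar>"
        by (metis abs_mult abs_triangle_ineq)
      also have "\<dots> \<le> M * \<bar>g (x q) - g (real q / 2^n)\<bar> + M * \<bar>f (x q) - f (real q / 2^n)\<bar>"
        using M xi li by (intro add_mono mult_right_mono) auto
      finally show ?thesis .
    qed
    have "(\<Sum>q<2^n. \<bar>f (x q) * g (x q) - f (real q / 2^n) * g (real q / 2^n)\<bar>) / 2^n
        \<le> (\<Sum>q<2^n. M * \<bar>g (x q) - g (real q / 2^n)\<bar> + M * \<bar>f (x q) - f (real q / 2^n)\<bar>) / 2^n"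
      by (intro divide_right_mono sum_mono pt) auto
    also have "\<dots> = M * ((\<Sum>q<2^n. \<bar>g (x q) - g (real q / 2^n)\<bar>) / 2^n)
        + M * ((\<Sum>q<2^n. \<bar>f (x q) - f (real q / 2^n)\<bar>) / 2^n)"
      by (simp add: sum.distrib sum_distrib_left add_divide_distrib)
    also have "\<dots> \<le> M * e' + M * e'"
      using N1 N2 n x M0 by (intro add_mono mult_left_mono) (auto intro: less_imp_le)
    also have "\<dots> = (2*M) * e'" by simp
    also have "\<dots> < (2*M+1) * e'" using e' by simp
    also have "\<dots> = \<epsilon>" unfolding e'_def using M0 by simp
    finally show "(\<Sum>q<2^n. \<bar>f (x q) * g (x q) - f (real q / 2^n) * g (real q / 2^n)\<bar>) / 2^n < \<epsilon>" .
  qed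
qed

definition Qn :: "nat \<Rightarrow> real \<Rightarrow> nat" where
  "Qn n t = min (2^n) (nat \<lfloor>t * 2^n\<rfloor> + 1)"

lemma Qn_facts:
  assumes "0 \<le> t" "t \<le> 1"
  shows "Qn n t \<ge> 1" "Qn n t \<le> 2^n" "real (Qn n t - 1) \<le> t * 2^n" "t * 2^n \<le> real (Qn n t)"
proof -
  have p: "(2::nat)^n \<ge> 1" by simp
  show "Qn n t \<ge> 1" "Qn n t \<le> 2^n" unfolding Qn_def using p by auto
  show "real (Qn n t - 1) \<le> t * 2^n"
  proof -
    have "Qn n t - 1 \<le> nat \<lfloor>t * 2^n\<rfloor>" unfolding Qn_def by simp
    then have "real (Qn n t - 1) \<le> real (nat \<lfloor>t * 2^n\<rfloor>)" by simp
    also have "\<dots> \<le> t * 2^n" using assms by simp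
    finally show ?thesis .
  qed
  show "t * 2^n \<le> real (Qn n t)"
  proof (cases "nat \<lfloor>t * 2^n\<rfloor> + 1 \<le> 2^n")
    case True
    then have "Qn n t = nat \<lfloor>t * 2^n\<rfloor> + 1" unfolding Qn_def by simp
    then show ?thesis using assms by simp linarith
  next
    case False
    then have "Qn n t = 2^n" unfolding Qn_def by simp
    then show ?thesis using assms by simp
  qed
qed

lemma content_Iv: "Henstock_Kurzweil_Integration.content (Iv n q) = 1 / 2^n"
  by (simp add: Iv_def field_simps)

lemma integral_pieces:
  fixes h :: "real \<Rightarrow> real"
  assumes h: "h integrable_on {0..1}"
  shows "p \<le> 2^n \<Longrightarrow> integral {0..real p / 2^n} h = (\<Sum>q<p. integral (Iv n q) h)"
proof (induction p)
  case 0
  then show ?case by simp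
next
  case (Suc p)
  have le: "real p / 2^n \<le> real (Suc p) / 2^n" by (simp add: divide_right_mono)
  have "real (Suc p) \<le> 2^n" using Suc.prems
    by (metis of_nat_le_iff of_nat_numeral of_nat_power)
  then have "real (Suc p) / 2^n \<le> 1" by simp
  then have int: "h integrable_on {0..real (Suc p) / 2^n}"
    using integrable_subinterval_real[OF h, of 0 "real (Suc p) / 2^n"] by auto
  have "integral {0..real (Suc p) / 2^n} h = integral {0..real p / 2^n} h + integral (Iv n p) h"
    unfolding Iv_def using Henstock_Kurzweil_Integration.integral_combine[OF _ le int] by simp
  then show ?case using Suc by simp
qed

lemma avg_point:
  fixes h :: "real \<Rightarrow> real"
  assumes h: "h integrable_on (Iv n q)" and eta: "\<eta> > 0"
  shows "\<exists>x\<in>Iv n q. \<bar>integral (Iv n q) h - h (real q / 2^n) / 2^n\<bar> \<le> (\<bar>h x - h (real q / 2^n)\<bar> + \<eta>) / 2^n"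
proof (rule ccontr)
  define l where "l = real q / 2^n"
  define A where "A = integral (Iv n q) h - h l / 2^n"
  assume "\<not> ?thesis"
  then have lt: "\<forall>x\<in>Iv n q. \<bar>h x - h l\<bar> < \<bar>A\<bar> * 2^n - \<eta>"
    unfolding A_def l_def by (auto simp: field_simps not_le)
  have B0: "0 \<le> \<bar>A\<bar> * 2^n - \<eta>" using lt left_in_Iv[of q n] unfolding l_def by force
  have hi: "(h has_integral integral (Iv n q) h) (Iv n q)" using h by blast
  have ci: "((\<lambda>s. h l) has_integral (h l / 2^n)) (Iv n q)"
    using has_integral_const_real[of "h l" "real q / 2^n" "real (Suc q) / 2^n"]
    by (simp add: Iv_def field_simps)
  have "((\<lambda>s. h s - h l) has_integral A) (Iv n q)"
    unfolding A_def using has_integral_diff[OF hi ci] .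
  then have "norm A \<le> (\<bar>A\<bar> * 2^n - \<eta>) * Henstock_Kurzweil_Integration.content (cbox (real q / 2^n) (real (Suc q) / 2^n))"
    using B0 lt by (intro has_integral_bound) (auto simp: Iv_def less_imp_le)
  also have "\<dots> = \<bar>A\<bar> - \<eta> / 2^n" by (simp add: field_simps)
  finally have "\<eta> / 2^n \<le> 0" by simp
  moreover have "\<eta> / 2^n > 0" using eta by simp
  ultimately show False by linarith
qed

lemma riemann_sum_conv:
  fixes h :: "real \<Rightarrow> real"
  assumes h: "h integrable_on {0..1}" and K: "\<forall>x\<in>{0..1}. \<bar>h x\<bar> \<le> K"
    and osc: "osc_small h" and t: "0 \<le> t" "t \<le> 1"
  shows "(\<lambda>n. (\<Sum>q<Qn n t. h (real q / 2^n)) / 2^n) \<longlonglongrightarrow> integral {0..t} h"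
proof (rule LIMSEQ_I)
  fix r :: real assume r: "r > 0"
  have K0: "K \<ge> 0" using K by force
  obtain N1 where N1: "\<forall>n\<ge>N1. \<forall>x. (\<forall>q<2^n. x q \<in> Iv n q) \<longrightarrow>
      (\<Sum>q<2^n. \<bar>h (x q) - h (real q / 2^n)\<bar>) / 2^n < r/4"
    using osc r unfolding osc_small_def by (meson zero_less_divide_iff zero_less_numeral)
  have "r / (4 * (K + 1)) > 0" using r K0 by simp
  then obtain N2 where N2: "\<forall>n\<ge>N2. 1 / 2^n < r / (4 * (K + 1))" using pow_small by blast
  show "\<exists>no. \<forall>n\<ge>no. norm ((\<Sum>q<Qn n t. h (real q / 2^n)) / 2^n - integral {0..t} h) < r"
  proof (intro exI[of _ "max N1 N2"] allI impI)
    fix n assume n: "max N1 N2 \<le> n"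
    define p where "p = Qn n t - 1"
    have Q: "Qn n t = Suc p" using Qn_facts(1)[OF t, of n] unfolding p_def by simp
    have p2: "p < 2^n" using Qn_facts(2)[OF t, of n] Q by simp
    have pt: "real p / 2^n \<le> t" using Qn_facts(3)[OF t, of n] unfolding p_def[symmetric]
      by (simp add: field_simps)
    have tp: "t \<le> real (Suc p) / 2^n" using Qn_facts(4)[OF t, of n] Q
      by (simp add: field_simps)
    have p0: "0 \<le> real p / 2^n" by simp
    have ht: "h integrable_on {0..t}" using integrable_subinterval_real[OF h, of 0 t] t by auto
    have split: "integral {0..t} h = integral {0..real p / 2^n} h + integral {real p / 2^n..t} h"
      using Henstock_Kurzweil_Integration.integral_combine[OF p0 pt ht] by simp
    have "\<bar>integral {real p / 2^n..t} h\<bar> \<le> K * Henstock_Kurzweil_Integration.content (cbox (real p / 2^n) t)"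
    proof -
      have "h integrable_on {real p / 2^n..t}" using integrable_subinterval_real[OF h, of "real p / 2^n" t] t p0 by auto
      then have "(h has_integral integral {real p / 2^n..t} h) (cbox (real p / 2^n) t)" by auto
      then have "norm (integral {real p / 2^n..t} h) \<le> K * Henstock_Kurzweil_Integration.content (cbox (real p / 2^n) t)"
      proof (rule has_integral_bound[OF K0])
        fix x assume "x \<in> cbox (real p / 2^n) t"
        then have "real p / 2^n \<le> x" "x \<le> t" by auto
        then have "x \<in> {0..1}" using p0 t unfolding atLeastAtMost_iff by linarith
        then show "norm (h x) \<le> K" using K by auto
      qed
      then show ?thesis by simp
    qed
    also have "\<dots> = K * (t - real p / 2^n)" using pt by simp
    also have "\<dots> \<le> K * (1 / 2^n)"
    proof -
      have "real (Suc p)/2^n = real p/2^n + 1/2^n" by (simp add: field_simps)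
      then have "t - real p / 2^n \<le> 1/2^n" using tp by linarith
      then show ?thesis using K0 by (rule mult_left_mono)
    qed
    finally have e1: "\<bar>integral {real p / 2^n..t} h\<bar> \<le> K * (1 / 2^n)" .
    have e2: "\<bar>h (real p / 2^n) / 2^n\<bar> \<le> K * (1 / 2^n)"
    proof -
      have "real p / 2^n \<in> {0..1}" using pt t p0 unfolding atLeastAtMost_iff by linarith
      then have "\<bar>h (real p / 2^n)\<bar> \<le> K" using K by blast
      then show ?thesis by (simp add: divide_right_mono)
    qed
    have "\<forall>q. \<exists>x. q < 2^n \<longrightarrow> x \<in> Iv n q \<and>
       \<bar>integral (Iv n q) h - h (real q / 2^n) / 2^n\<bar> \<le> (\<bar>h x - h (real q / 2^n)\<bar> + r/4) / 2^n"
    proof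
      fix q
      show "\<exists>x. q < 2^n \<longrightarrow> x \<in> Iv n q \<and>
       \<bar>integral (Iv n q) h - h (real q / 2^n) / 2^n\<bar> \<le> (\<bar>h x - h (real q / 2^n)\<bar> + r/4) / 2^n"
      proof (cases "q < 2^n")
        case True
        have "h integrable_on Iv n q" using Iv_sub[OF True] unfolding Iv_def
          by (rule integrable_subinterval_real[OF h, rotated])
        from avg_point[OF this, of "r/4"] r show ?thesis by auto
      qed auto
    qed
    then obtain x where x: "\<And>q. q < 2^n \<Longrightarrow> x q \<in> Iv n q \<and>
       \<bar>integral (Iv n q) h - h (real q / 2^n) / 2^n\<bar> \<le> (\<bar>h (x q) - h (real q / 2^n)\<bar> + r/4) / 2^n"
      by metis
    have "\<bar>integral {0..real p / 2^n} h - (\<Sum>q<p. h (real q / 2^n)) / 2^n\<bar>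
        = \<bar>\<Sum>q<p. (integral (Iv n q) h - h (real q / 2^n) / 2^n)\<bar>"
      using integral_pieces[OF h, of p n] p2 by (simp add: sum_subtractf sum_divide_distrib)
    also have "\<dots> \<le> (\<Sum>q<p. \<bar>integral (Iv n q) h - h (real q / 2^n) / 2^n\<bar>)"
      by (rule sum_abs)
    also have "\<dots> \<le> (\<Sum>q<2^n. \<bar>integral (Iv n q) h - h (real q / 2^n) / 2^n\<bar>)"
      using p2 by (intro sum_mono2) auto
    also have "\<dots> \<le> (\<Sum>q<2^n. (\<bar>h (x q) - h (real q / 2^n)\<bar> + r/4) / 2^n)"
      using x by (intro sum_mono) auto
    also have "\<dots> = (\<Sum>q<2^n. \<bar>h (x q) - h (real q / 2^n)\<bar>) / 2^n + r/4"
      by (simp add: sum.distrib sum_divide_distrib[symmetric] add_divide_distrib)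
    also have "\<dots> < r/4 + r/4"
    proof -
      have "\<forall>q<2^n. x q \<in> Iv n q" using x by blast
      then have "(\<Sum>q<2^n. \<bar>h (x q) - h (real q / 2^n)\<bar>) / 2^n < r/4" using N1 n by auto
      then show ?thesis by linarith
    qed
    finally have e3: "\<bar>integral {0..real p / 2^n} h - (\<Sum>q<p. h (real q / 2^n)) / 2^n\<bar> < r/2" by simp
    have "K * (1 / 2^n) \<le> K * (r / (4 * (K + 1)))" using N2 n K0
      by (intro mult_left_mono) (auto intro: less_imp_le)
    also have "\<dots> \<le> r / 4" using K0 r by (simp add: field_simps)
    finally have e4: "K * (1 / 2^n) \<le> r / 4" .
    have "(\<Sum>q<Qn n t. h (real q / 2^n)) / 2^n = (\<Sum>q<p. h (real q / 2^n)) / 2^n + h (real p / 2^n) / 2^n"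
      unfolding Q by (simp add: add_divide_distrib)
    then show "norm ((\<Sum>q<Qn n t. h (real q / 2^n)) / 2^n - integral {0..t} h) < r"
      unfolding real_norm_def using split e1 e2 e3 e4 by argo
  qed
qed

lemma classF_bound:
  assumes "classF f finf"
  shows "\<exists>M. \<forall>n. \<forall>x\<in>{0..1}. \<bar>f n x\<bar> \<le> M \<and> \<bar>finf x\<bar> \<le> M"
proof -
  have bd: "\<forall>n. bounded (f n ` {0..1})" and ul: "uniform_limit {0..1} f finf sequentially"
    using assms unfolding classF_def by auto
  have "\<forall>n. \<exists>B. \<forall>x\<in>{0..1}. \<bar>f n x\<bar> \<le> B"
    using bd unfolding bounded_iff by (auto simp: real_norm_def)
  then obtain B where B: "\<And>n x. x \<in> {0..1} \<Longrightarrow> \<bar>f n x\<bar> \<le> B n" by metis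
  from uniform_limitD[OF ul, of 1] obtain N where N: "\<And>n. n \<ge> N \<Longrightarrow> \<forall>x\<in>{0..1}. dist (f n x) (finf x) < 1"
    by (auto simp: eventually_sequentially)
  define M where "M = (\<Sum>n\<le>N. \<bar>B n\<bar>) + 2"
  have BM: "B n \<le> M - 2" if "n \<le> N" for n
  proof -
    have "B n \<le> \<bar>B n\<bar>" by simp
    also have "\<dots> \<le> (\<Sum>n\<le>N. \<bar>B n\<bar>)"
      using that by (intro member_le_sum) auto
    finally show ?thesis unfolding M_def by simp
  qed
  have fi: "\<bar>finf x\<bar> \<le> M - 1" if x: "x \<in> {0..1}" for x
  proof -
    have "dist (f N x) (finf x) < 1" using N[of N] x by auto
    then have "\<bar>finf x\<bar> \<le> \<bar>f N x\<bar> + 1" by (simp add: dist_real_def)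
    then show ?thesis using B[OF x, of N] BM[of N] by simp
  qed
  have "\<bar>f n x\<bar> \<le> M \<and> \<bar>finf x\<bar> \<le> M" if x: "x \<in> {0..1}" for n x
  proof (cases "n \<le> N")
    case True
    then show ?thesis using B[OF x, of n] BM[of n] fi[OF x] by simp
  next
    case False
    have "dist (f n x) (finf x) < 1" using N[of n] x False by auto
    then have "\<bar>f n x\<bar> \<le> \<bar>finf x\<bar> + 1" by (simp add: dist_real_def)
    then show ?thesis using fi[OF x] by simp
  qed
  then show ?thesis by blast
qed

lemma prod_integrable:
  fixes f g :: "real \<Rightarrow> real"
  assumes f: "f integrable_on {0..1}" and g: "g integrable_on {0..1}"
    and M: "\<forall>x\<in>{0..1}. \<bar>f x\<bar> \<le> M \<and> \<bar>g x\<bar> \<le> M"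
  shows "(\<lambda>x. f x * g x) integrable_on {0..1}"
proof -
  have "g absolutely_integrable_on {0..1}"
    by (rule absolutely_integrable_integrable_bound[where g="\<lambda>_. M"]) (use M g in auto)
  moreover have "f \<in> borel_measurable (lebesgue_on {0..1})" by (rule integrable_imp_measurable) fact
  moreover have "bounded (f ` {0..1})" unfolding bounded_iff using M by (auto simp: real_norm_def)
  ultimately have "(\<lambda>x. f x * g x) absolutely_integrable_on {0..1}"
    by (intro absolutely_integrable_bounded_measurable_product_real) auto
  then show ?thesis by (simp add: absolutely_integrable_on_def)
qed

lemma lsum_unif:
  fixes F :: "nat \<Rightarrow> real \<Rightarrow> real"
  assumes ul: "uniform_limit {0..1} F H sequentially" and t: "0 \<le> t" "t \<le> 1"
  shows "(\<lambda>n. (\<Sum>q<Qn n t. F n (real q / 2^n)) / 2^n - (\<Sum>q<Qn n t. H (real q / 2^n)) / 2^n) \<longlonglongrightarrow> 0"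
proof (rule LIMSEQ_I)
  fix r :: real assume r: "r > 0"
  from uniform_limitD[OF ul, of "r/2"] r obtain N where N: "\<And>n. n \<ge> N \<Longrightarrow> \<forall>x\<in>{0..1}. dist (F n x) (H x) < r/2"
    by (auto simp: eventually_sequentially)
  show "\<exists>no. \<forall>n\<ge>no. norm ((\<Sum>q<Qn n t. F n (real q / 2^n)) / 2^n - (\<Sum>q<Qn n t. H (real q / 2^n)) / 2^n - 0) < r"
  proof (intro exI[of _ N] allI impI)
    fix n assume n: "N \<le> n"
    have Q: "Qn n t \<le> 2^n" using Qn_facts(2)[OF t] by simp
    have pt: "\<bar>F n (real q / 2^n) - H (real q / 2^n)\<bar> \<le> r/2" if "q \<in> {..<Qn n t}" for q
    proof -
      have "q < 2^n" using that Q by auto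
      then have "real q / 2^n \<in> {0..1}" using left_in_Iv[of q n] Iv_sub[of q n] by blast
      then show ?thesis using N[OF n] by (auto simp: dist_real_def intro: less_imp_le)
    qed
    have "\<bar>(\<Sum>q<Qn n t. F n (real q / 2^n)) / 2^n - (\<Sum>q<Qn n t. H (real q / 2^n)) / 2^n\<bar>
        = \<bar>\<Sum>q<Qn n t. F n (real q / 2^n) - H (real q / 2^n)\<bar> / 2^n"
      by (simp add: sum_subtractf diff_divide_distrib[symmetric])
    also have "\<dots> \<le> (\<Sum>q<Qn n t. r/2) / 2^n"
      by (intro divide_right_mono order.trans[OF sum_abs] sum_mono pt) auto
    also have "\<dots> = real (Qn n t) / 2^n * (r/2)" by simp
    also have "\<dots> \<le> 1 * (r/2)"
    proof (intro mult_right_mono)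
      have "real (Qn n t) \<le> 2^n" using Q by (metis of_nat_le_iff of_nat_numeral of_nat_power)
      then show "real (Qn n t) / 2^n \<le> 1" by simp
    qed (use r in auto)
    also have "\<dots> < r" using r by simp
    finally show "norm ((\<Sum>q<Qn n t. F n (real q / 2^n)) / 2^n - (\<Sum>q<Qn n t. H (real q / 2^n)) / 2^n - 0) < r"
      by simp
  qed
qed

lemma P_conv:
  assumes f: "classF f finf" and g: "classF g ginf" and t: "0 \<le> t" "t \<le> 1"
  shows "(\<lambda>n. (\<Sum>q<Qn n t. f n (real q / 2^n) * g n (real q / 2^n)) / 2^n)
           \<longlonglongrightarrow> integral {0..t} (\<lambda>s. finf s * ginf s)"
proof -
  obtain M1 where M1: "\<forall>n. \<forall>x\<in>{0..1}. \<bar>f n x\<bar> \<le> M1 \<and> \<bar>finf x\<bar> \<le> M1" using classF_bound[OF f] by blast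
  obtain M2 where M2: "\<forall>n. \<forall>x\<in>{0..1}. \<bar>g n x\<bar> \<le> M2 \<and> \<bar>ginf x\<bar> \<le> M2" using classF_bound[OF g] by blast
  define M where "M = max M1 M2"
  have M: "\<forall>x\<in>{0..1}. \<bar>finf x\<bar> \<le> M \<and> \<bar>ginf x\<bar> \<le> M" using M1 M2 unfolding M_def by force
  have fr: "riemann_integrable_on finf 0 1" and gr: "riemann_integrable_on ginf 0 1"
    using f g unfolding classF_def by auto
  have fi: "finf integrable_on {0..1}" and gi: "ginf integrable_on {0..1}"
    using riemann_integrable fr gr by auto
  have hi: "(\<lambda>x. finf x * ginf x) integrable_on {0..1}" by (rule prod_integrable[OF fi gi M])
  have hK: "\<forall>x\<in>{0..1}. \<bar>finf x * ginf x\<bar> \<le> M * M"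
    using M by (auto simp: abs_mult intro: mult_mono')
  have ho: "osc_small (\<lambda>x. finf x * ginf x)"
    by (rule osc_small_mult[OF riemann_osc[OF fr] riemann_osc[OF gr] M])
  have c1: "(\<lambda>n. (\<Sum>q<Qn n t. finf (real q / 2^n) * ginf (real q / 2^n)) / 2^n) \<longlonglongrightarrow> integral {0..t} (\<lambda>s. finf s * ginf s)"
    using riemann_sum_conv[OF hi hK ho t] by simp
  have ul: "uniform_limit {0..1} (\<lambda>n x. f n x * g n x) (\<lambda>x. finf x * ginf x) sequentially"
  proof (rule uniform_lim_mult)
    show "uniform_limit {0..1} f finf sequentially" "uniform_limit {0..1} g ginf sequentially"
      using f g unfolding classF_def by auto
    show "bounded (finf ` {0..1})" "bounded (ginf ` {0..1})"
      unfolding bounded_iff using M by (auto simp: real_norm_def)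
  qed
  note c2 = lsum_unif[OF ul t]
  from tendsto_add[OF c2 c1] show ?thesis by simp
qed


definition S :: "(nat \<Rightarrow> real \<Rightarrow> real) \<Rightarrow> nat \<Rightarrow> real \<Rightarrow> real" where
  "S f n t = (\<Sum>k<2^n. f n (real k / 2^n) * fs n k t)"

definition sg :: "nat \<Rightarrow> nat \<Rightarrow> nat \<Rightarrow> real" where
  "sg m n j = (if even (j div 2^(m-n-1)) then 1 else -1)"

definition D :: "(nat \<Rightarrow> real) \<Rightarrow> nat \<Rightarrow> nat \<Rightarrow> nat \<Rightarrow> real" where
  "D u m n j = u (j div 2^(m-n)) * 2 powr (- real n / 2) * sg m n j / 2^(m-n)"

lemma e00_zero: "x \<le> 0 \<or> x \<ge> 1 \<Longrightarrow> e00 x = 0"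
  by (auto simp: e00_def)

lemma e00_lin1: "0 \<le> u \<Longrightarrow> u \<le> 1/2 \<Longrightarrow> e00 u = u"
  by (auto simp: e00_def)

lemma e00_lin2: "1/2 \<le> u \<Longrightarrow> u \<le> 1 \<Longrightarrow> e00 u = 1 - u"
  by (auto simp: e00_def)

lemma fs_dyadic_zero:
  assumes "m \<le> n" shows "fs n k (real j / 2^m) = 0"
proof -
  have p: "(2::real)^n = 2^m * 2^(n-m)" using assms by (simp add: power_add[symmetric])
  have "2^n * (real j / 2^m) - real k = real (j * 2^(n-m)) - real k"
    unfolding p by simp
  also have "e00 (real (j * 2^(n-m)) - real k) = 0"
  proof (rule e00_zero)
    show "real (j * 2^(n-m)) - real k \<le> 0 \<or> real (j * 2^(n-m)) - real k \<ge> 1"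
    proof (cases "j * 2^(n-m) \<le> k")
      case True
      then have "real (j * 2^(n-m)) \<le> real k" by (simp only: of_nat_le_iff)
      then show ?thesis by linarith
    next
      case False
      then have "k + 1 \<le> j*2^(n-m)" by simp
      then have "real k + 1 \<le> real (j*2^(n-m))" by (metis of_nat_1 of_nat_add of_nat_le_iff)
      then show ?thesis by linarith
    qed
  qed
  finally show ?thesis by (simp add: fs_def)
qed

lemma xF_dyadic: "xF f (real j / 2^m) = (\<Sum>n<m. S f n (real j / 2^m))"
proof -
  have "xF f (real j / 2^m) = suminf (\<lambda>n. S f n (real j / 2^m))"
    unfolding xF_def S_def ..
  also have "\<dots> = (\<Sum>n\<in>{..<m}. S f n (real j / 2^m))"
    by (rule suminf_finite) (auto simp: S_def fs_dyadic_zero)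
  finally show ?thesis .
qed

lemma S_single:
  assumes q: "q < 2^n" and lo: "real q \<le> 2^n * t" and hi: "2^n * t \<le> real q + 1"
  shows "S f n t = f n (real q / 2^n) * fs n q t"
proof -
  have z: "f n (real k / 2^n) * fs n k t = 0" if "k \<noteq> q" for k
  proof -
    have "2^n * t - real k \<le> 0 \<or> 2^n * t - real k \<ge> 1"
    proof (cases "k < q")
      case True
      then have "real k + 1 \<le> real q" by linarith
      then show ?thesis using lo by linarith
    next
      case False
      then have "real q + 1 \<le> real k" using that by linarith
      then show ?thesis using hi by linarith
    qed
    then show ?thesis by (simp add: fs_def e00_zero)
  qed
  have "S f n t = (\<Sum>k\<in>{q}. f n (real k / 2^n) * fs n k t)"
    unfolding S_def using q z by (intro sum.mono_neutral_right) auto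
  then show ?thesis by simp
qed

lemma incr_level:
  assumes nm: "n < m" and j: "j < 2^m"
  shows "S f n (real (Suc j) / 2^m) - S f n (real j / 2^m) = D (\<lambda>k. f n (real k / 2^n)) m n j"
proof -
  define B where "B = (2::nat)^(m-n)"
  define C where "C = (2::nat)^(m-n-1)"
  have BC: "B = 2 * C" unfolding B_def C_def using nm
    by (metis Suc_diff_Suc diff_Suc_1 power_Suc zero_less_diff)
  have Bpos: "B > 0" unfolding B_def by simp
  have Cpos: "C > 0" unfolding C_def by simp
  have pm: "(2::real)^m = 2^n * real B" unfolding B_def using nm
    by (simp add: power_add[symmetric])
  define q where "q = j div B"
  define r where "r = j mod B"
  have jqr: "j = q * B + r" unfolding q_def r_def by simp
  have rB: "r < B" unfolding r_def using Bpos by simp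
  have q2: "q < 2^n"
  proof -
    have "(2::nat)^m = 2^n * B" unfolding B_def using nm by (simp add: power_add[symmetric])
    then have "j < 2^n * B" using j by simp
    then show ?thesis unfolding q_def using Bpos by (simp add: div_less_iff_less_mult)
  qed
  have sc: "2^n * (real j' / 2^m) = real j' / real B" for j'
    unfolding pm using Bpos by (simp add: field_simps)
  have Bq: "real j / real B = real q + real r / real B" "real (Suc j) / real B = real q + (real r + 1) / real B"
    unfolding jqr using Bpos by (simp_all add: field_simps)
  have r0: "0 \<le> real r / real B" and r1: "(real r + 1) / real B \<le> 1"
    using rB Bpos by (simp_all add: field_simps)
  have Sj: "S f n (real j' / 2^m) = f n (real q / 2^n) * fs n q (real j' / 2^m)"
    if "real q \<le> real j' / real B" "real j' / real B \<le> real q + 1" for j'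
    using that by (intro S_single[OF q2]) (unfold sc, auto)
  have e: "e00 ((real r + 1) / real B) - e00 (real r / real B) = sg m n j / real B"
  proof (cases "r < C")
    case True
    have ev: "even (j div C)"
    proof -
      have "j = r + (2 * q) * C" unfolding jqr BC by simp
      then have "j div C = 2 * q + r div C" using Cpos by simp
      then show ?thesis using True by simp
    qed
    have a: "(real r + 1) / real B \<le> 1/2" using True BC by (simp add: field_simps)
    have b: "real r / real B \<le> 1/2" using True BC by (simp add: field_simps)
    have c: "0 \<le> (real r + 1) / real B" by simp
    have "e00 ((real r + 1) / real B) - e00 (real r / real B) = (real r + 1) / real B - real r / real B"
      using e00_lin1[OF c a] e00_lin1[OF r0 b] by simp
    also have "\<dots> = 1 / real B" using Bpos by (simp add: field_simps)
    finally show ?thesis using ev unfolding sg_def C_def by simp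
  next
    case False
    have ev: "odd (j div C)"
    proof -
      have r': "r - C < C" using rB BC by simp
      have "r div C = ((r - C) + 1 * C) div C" using False by simp
      also have "\<dots> = 1 + (r - C) div C" using Cpos by simp
      also have "\<dots> = 1" using r' by simp
      finally have "r div C = 1" .
      moreover have "j = r + (2 * q) * C" unfolding jqr BC by simp
      then have "j div C = 2 * q + r div C" using Cpos by simp
      ultimately show ?thesis by simp
    qed
    have "real C \<le> real r" using False by simp
    then have a: "1/2 \<le> real r / real B" using BC Cpos by (simp add: field_simps)
    have b: "1/2 \<le> (real r + 1) / real B" using a Bpos by (simp add: divide_right_mono order_trans)
    have c: "real r / real B \<le> 1" using rB by simp
    have "e00 ((real r + 1) / real B) - e00 (real r / real B) = (1 - (real r + 1) / real B) - (1 - real r / real B)"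
      using e00_lin2[OF b r1] e00_lin2[OF a c] by simp
    also have "\<dots> = - 1 / real B" using Bpos by (simp add: field_simps)
    finally show ?thesis using ev unfolding sg_def C_def by simp
  qed
  have "S f n (real (Suc j) / 2^m) - S f n (real j / 2^m)
      = f n (real q / 2^n) * (fs n q (real (Suc j) / 2^m) - fs n q (real j / 2^m))"
  proof -
    have r2: "real r / real B \<le> 1" using rB by simp
    have "S f n (real j / 2^m) = f n (real q / 2^n) * fs n q (real j / 2^m)"
      by (rule Sj) (use Bq r0 r2 in simp_all)
    moreover have "S f n (real (Suc j) / 2^m) = f n (real q / 2^n) * fs n q (real (Suc j) / 2^m)"
      by (rule Sj) (use Bq r1 in simp_all)
    ultimately show ?thesis by (simp add: right_diff_distrib)
  qed
  also have "fs n q (real (Suc j) / 2^m) - fs n q (real j / 2^m)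
      = 2 powr (- real n / 2) * (e00 ((real r + 1) / real B) - e00 (real r / real B))"
    unfolding fs_def sc Bq by (simp add: right_diff_distrib)
  finally have X: "S f n (real (Suc j) / 2^m) - S f n (real j / 2^m) = f n (real q / 2^n) * (2 powr (- real n / 2) * (sg m n j / real B))"
    unfolding e .
  show ?thesis unfolding D_def X unfolding q_def B_def by simp
qed

lemma incr_xF:
  assumes "j < 2^m"
  shows "xF f (real (Suc j) / 2^m) - xF f (real j / 2^m) = (\<Sum>n<m. D (\<lambda>k. f n (real k / 2^n)) m n j)"
  unfolding xF_dyadic sum_subtractf[symmetric] using incr_level assms by (intro sum.cong) auto

lemma nat_le_floor_iff: "(a::real) \<ge> 0 \<Longrightarrow> j \<le> nat \<lfloor>a\<rfloor> \<longleftrightarrow> real j \<le> a"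
proof -
  assume a: "a \<ge> 0"
  have "j \<le> nat \<lfloor>a\<rfloor> \<longleftrightarrow> int j \<le> \<lfloor>a\<rfloor>" using a by linarith
  also have "\<dots> \<longleftrightarrow> real_of_int (int j) \<le> a" by (rule le_floor_iff)
  finally show ?thesis by simp
qed

lemma Qn_mem: "0 \<le> t \<Longrightarrow> j < Qn m t \<longleftrightarrow> j < 2^m \<and> real j \<le> t * 2^m"
  unfolding Qn_def using nat_le_floor_iff[of "t * 2^m" j] by auto

lemma cov_reindex:
  assumes t: "0 \<le> t" "t \<le> 1"
  shows "cov_n m x y t = (\<Sum>j<Qn m t. (x (real (Suc j) / 2^m) - x (real j / 2^m)) * (y (real (Suc j) / 2^m) - y (real j / 2^m)))"
proof -
  define F where "F s = (x (dsucc m s) - x s) * (y (dsucc m s) - y s)" for s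
  define A where "A = {j. j \<le> 2^m \<and> real j / 2^m \<le> t}"
  have set: "{s \<in> dyadic m. s \<le> t} = (\<lambda>j. real j / 2^m) ` A"
    unfolding dyadic_def A_def by auto
  have inj: "inj_on (\<lambda>j. real j / 2^m) A" by (auto simp: inj_on_def)
  have finA: "finite A" unfolding A_def by simp
  have "cov_n m x y t = (\<Sum>j\<in>A. F (real j / 2^m))"
    unfolding cov_n_def F_def set sum.reindex[OF inj] by simp
  also have "\<dots> = (\<Sum>j<Qn m t. F (real j / 2^m))"
  proof (rule sum.mono_neutral_right[OF finA])
    show "{..<Qn m t} \<subseteq> A"
      unfolding A_def using Qn_mem[OF t(1)] by (auto simp: field_simps)
    show "\<forall>j\<in>A - {..<Qn m t}. F (real j / 2^m) = 0"
    proof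
      fix j assume j: "j \<in> A - {..<Qn m t}"
      then have "j = 2^m" unfolding A_def using Qn_mem[OF t(1), of j m] by (auto simp: field_simps)
      then show "F (real j / 2^m) = 0" unfolding F_def dsucc_def by simp
    qed
  qed
  also have "\<dots> = (\<Sum>j<Qn m t. (x (real (Suc j) / 2^m) - x (real j / 2^m)) * (y (real (Suc j) / 2^m) - y (real j / 2^m)))"
  proof (rule sum.cong[OF refl])
    fix j assume "j \<in> {..<Qn m t}"
    then have "j < 2^m" using Qn_mem[OF t(1)] by auto
    then have "real (Suc j) \<le> 2^m" by (metis Suc_leI of_nat_le_iff of_nat_numeral of_nat_power)
    then have "dsucc m (real j / 2^m) = real (Suc j) / 2^m"
      unfolding dsucc_def by (simp add: field_simps)
    then show "F (real j / 2^m) = (x (real (Suc j) / 2^m) - x (real j / 2^m)) * (y (real (Suc j) / 2^m) - y (real j / 2^m))"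
      unfolding F_def by simp
  qed
  finally show ?thesis .
qed


definition alt :: "nat \<Rightarrow> real" where "alt i = (if even i then 1 else -1)"

lemma block_full:
  fixes \<phi> :: "nat \<Rightarrow> real"
  shows "(\<Sum>j<p*B. \<phi> (j div B)) = real B * (\<Sum>q<p. \<phi> q)"
proof -
  have "(\<Sum>j<p*B. \<phi> (j div B)) = (\<Sum>q<p. \<Sum>j\<in>{q*B..<q*B+B}. \<phi> (j div B))"
    by (rule sum.nat_group[symmetric])
  also have "\<dots> = (\<Sum>q<p. real B * \<phi> q)"
  proof (rule sum.cong[OF refl])
    fix q
    have "(\<Sum>j\<in>{q*B..<q*B+B}. \<phi> (j div B)) = (\<Sum>j\<in>{q*B..<q*B+B}. \<phi> q)"
    proof (rule sum.cong[OF refl])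
      fix j assume j: "j \<in> {q*B..<q*B+B}"
      then have "B > 0" by auto
      with j have "j div B = q" by (auto intro: div_nat_eqI simp: mult.commute)
      then show "\<phi> (j div B) = \<phi> q" by simp
    qed
    then show "(\<Sum>j\<in>{q*B..<q*B+B}. \<phi> (j div B)) = real B * \<phi> q" by simp
  qed
  finally show ?thesis by (simp add: sum_distrib_left)
qed

lemma block_split:
  fixes \<phi> :: "nat \<Rightarrow> real"
  assumes B: "B > 0"
  shows "(\<Sum>j<J. \<phi> (j div B)) = real B * (\<Sum>q<J div B. \<phi> q) + real (J mod B) * \<phi> (J div B)"
proof -
  define a where "a = J div B"
  define b where "b = J mod B"
  have J: "J = a * B + b" unfolding a_def b_def by simp
  have "(\<Sum>j<J. \<phi> (j div B)) = (\<Sum>j\<in>{0..<a*B}. \<phi> (j div B)) + (\<Sum>j\<in>{a*B..<J}. \<phi> (j div B))"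
    unfolding lessThan_atLeast0 using J by (intro sum.atLeastLessThan_concat[symmetric]) auto
  also have "(\<Sum>j\<in>{a*B..<J}. \<phi> (j div B)) = (\<Sum>j\<in>{a*B..<J}. \<phi> a)"
  proof (rule sum.cong[OF refl])
    fix j assume j: "j \<in> {a*B..<J}"
    have "b < B" unfolding b_def using B by simp
    with j J have "j div B = a" by (auto intro: div_nat_eqI simp: mult.commute)
    then show "\<phi> (j div B) = \<phi> a" by simp
  qed
  also have "\<dots> = real b * \<phi> a" using J by simp
  finally show ?thesis unfolding a_def b_def using block_full[where p=a and B=B and \<phi>=\<phi>]
    by (simp add: lessThan_atLeast0 a_def)
qed

lemma alt_pairs: "(\<Sum>i<2*k. c (i div 2) * alt i) = (0::real)"
proof (induction k)
  case 0 then show ?case by simp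
next
  case (Suc k)
  have e: "2 * Suc k = Suc (Suc (2*k))" by simp
  show ?case unfolding e sum.lessThan_Suc using Suc by (simp add: alt_def)
qed

lemma cancel:
  assumes C: "C > 0" and K: "\<bar>c (J div C div 2)\<bar> \<le> K"
  shows "\<bar>\<Sum>j<J. c (j div C div 2) * alt (j div C)\<bar> \<le> real C * K"
proof -
  define a where "a = J div C"
  have K0: "K \<ge> 0" using K by linarith
  have m: "J mod C < C" using C by simp
  have "(\<Sum>j<J. c (j div C div 2) * alt (j div C)) = real C * (\<Sum>i<a. c (i div 2) * alt i) + real (J mod C) * (c (a div 2) * alt a)"
    unfolding a_def using block_split[OF C, of "\<lambda>i. c (i div 2) * alt i" J] by simp
  also have "\<dots> = (if even a then real (J mod C) * c (a div 2) else (real C - real (J mod C)) * c (a div 2))"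
  proof (cases "even a")
    case True
    then obtain k where "a = 2*k" by blast
    then show ?thesis using alt_pairs[of c k] by (simp add: alt_def)
  next
    case False
    then obtain k where k: "a = Suc (2*k)" by (metis oddE Suc_eq_plus1)
    then have "(\<Sum>i<a. c (i div 2) * alt i) = c k" using alt_pairs[of c k] by (simp add: alt_def)
    moreover have "a div 2 = k" using k by simp
    ultimately show ?thesis using False by (simp add: alt_def algebra_simps)
  qed
  also have "\<bar>\<dots>\<bar> \<le> real C * K"
  proof -
    have ca: "\<bar>c (a div 2)\<bar> \<le> K" using K unfolding a_def .
    have "real (J mod C) \<le> real C" using m by simp
    then show ?thesis using ca K0
      by (auto simp: abs_mult intro: mult_mono)
  qed
  finally show ?thesis .
qed

lemma diag_block:
  fixes \<phi> :: "nat \<Rightarrow> real"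
  assumes B: "B > 0" and lo: "p * B \<le> J" and hi: "J \<le> Suc p * B" and K: "\<bar>\<phi> p\<bar> \<le> K"
  shows "\<bar>(\<Sum>j<J. \<phi> (j div B)) - real B * (\<Sum>q<Suc p. \<phi> q)\<bar> \<le> real B * K"
proof (cases "J = Suc p * B")
  case True
  then have "J div B = Suc p" "J mod B = 0" using B by simp_all
  then show ?thesis using block_split[OF B, of \<phi> J] K B by simp
next
  case False
  then have J: "J < Suc p * B" using hi by simp
  then have d: "J div B = p" using lo B by (auto intro: div_nat_eqI simp: mult.commute)
  have mB: "J mod B < B" using B by simp
  have "(\<Sum>j<J. \<phi> (j div B)) - real B * (\<Sum>q<Suc p. \<phi> q) = (real (J mod B) - real B) * \<phi> p"
    using block_split[OF B, of \<phi> J] d by (simp add: algebra_simps)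
  also have "\<bar>\<dots>\<bar> \<le> real B * K"
  proof -
    have "\<bar>real (J mod B) - real B\<bar> \<le> real B" using mB by simp
    then show ?thesis using K by (simp add: abs_mult mult_mono)
  qed
  finally show ?thesis .
qed

lemma Qn_rel:
  assumes nm: "n \<le> m" and t: "0 \<le> t" "t \<le> 1"
  shows "(Qn n t - 1) * 2^(m-n) \<le> Qn m t" "Qn m t \<le> Qn n t * 2^(m-n)"
proof -
  define B where "B = (2::nat)^(m-n)"
  have pm: "(2::nat)^m = 2^n * B" unfolding B_def using nm by (simp add: power_add[symmetric])
  have pmr: "(2::real)^m = 2^n * real B" unfolding B_def using nm by (simp add: power_add[symmetric])
  have Bpos: "B > 0" unfolding B_def by simp
  show "(Qn n t - 1) * 2^(m-n) \<le> Qn m t"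
  proof -
    have "Qn n t - 1 < 2^n" using Qn_facts(1,2)[OF t, of n] by linarith
    then have "(Qn n t - 1) * B < 2^n * B" using Bpos by simp
    then have a: "(Qn n t - 1) * B < 2^m" unfolding pm .
    have "real ((Qn n t - 1) * B) = real (Qn n t - 1) * real B" by simp
    also have "\<dots> \<le> t * 2^n * real B" using Qn_facts(3)[OF t, of n] Bpos by (intro mult_right_mono) auto
    also have "\<dots> = t * 2^m" unfolding pmr by simp
    finally have "(Qn n t - 1) * B < Qn m t" using Qn_mem[OF t(1)] a by blast
    then show ?thesis unfolding B_def by simp
  qed
  show "Qn m t \<le> Qn n t * 2^(m-n)"
  proof (rule ccontr)
    assume "\<not> ?thesis"
    then have "Qn n t * B < Qn m t" unfolding B_def by simp
    then have c: "Qn n t * B < 2^m" "real (Qn n t * B) \<le> t * 2^m" using Qn_mem[OF t(1)] by blast+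
    from c(1) have "Qn n t < 2^n" unfolding pm using Bpos by simp
    moreover from c(2) have "real (Qn n t) \<le> t * 2^n" unfolding pmr using Bpos by (simp add: mult.assoc)
    ultimately have "Qn n t < Qn n t" using Qn_mem[OF t(1)] by blast
    then show False by simp
  qed
qed

lemma powr_sq: "(2 powr (- real n / 2)) * (2 powr (- real n / 2)) = 1 / (2::real)^n"
proof -
  have "(2::real) powr (- real n / 2) * 2 powr (- real n / 2) = 2 powr (- real n)"
    by (simp add: powr_add[symmetric])
  also have "\<dots> = 1 / 2^n" by (simp add: powr_minus powr_realpow divide_inverse)
  finally show ?thesis .
qed

lemma sg_sq: "sg m n j * sg m n j = 1" by (simp add: sg_def)

lemma diag_D:
  assumes nm: "n < m" and t: "0 \<le> t" "t \<le> 1"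
    and u: "\<forall>k\<le>2^n. \<bar>u k\<bar> \<le> M" and v: "\<forall>k\<le>2^n. \<bar>v k\<bar> \<le> M"
  shows "\<bar>(\<Sum>j<Qn m t. D u m n j * D v m n j) - (\<Sum>q<Qn n t. u q * v q) / 2^m\<bar> \<le> M * M / 2^m"
proof -
  define B where "B = (2::nat)^(m-n)"
  have pmr: "(2::real)^m = 2^n * real B" unfolding B_def using nm by (simp add: power_add[symmetric])
  have Bpos: "B > 0" unfolding B_def by simp
  define \<phi> where "\<phi> q = u q * v q" for q
  have eq: "D u m n j * D v m n j = \<phi> (j div B) / (2^n * real B * real B)" for j
  proof -
    have "D u m n j * D v m n j = \<phi> (j div B) * ((2 powr (- real n / 2)) * (2 powr (- real n / 2))) * (sg m n j * sg m n j) / (real B * real B)"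
      unfolding D_def \<phi>_def B_def by (simp add: field_simps)
    then show ?thesis unfolding powr_sq sg_sq by simp
  qed
  define p where "p = Qn n t - 1"
  have Q: "Qn n t = Suc p" using Qn_facts(1)[OF t, of n] unfolding p_def by simp
  have lo: "p * B \<le> Qn m t" and hi: "Qn m t \<le> Suc p * B"
    using Qn_rel[OF less_imp_le[OF nm] t] Q unfolding p_def B_def by auto
  have pb: "p \<le> 2^n" using Qn_facts(2)[OF t, of n] Q by simp
  have K: "\<bar>\<phi> p\<bar> \<le> M * M" unfolding \<phi>_def using u v pb
    by (simp add: abs_mult mult_mono' order_trans[OF abs_ge_zero])
  note db = diag_block[where \<phi>=\<phi>, OF Bpos lo hi K]
  have "(\<Sum>j<Qn m t. D u m n j * D v m n j) - (\<Sum>q<Qn n t. u q * v q) / 2^m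
      = ((\<Sum>j<Qn m t. \<phi> (j div B)) - real B * (\<Sum>q<Suc p. \<phi> q)) / (2^n * real B * real B)"
    unfolding eq Q pmr \<phi>_def using Bpos by (simp add: sum_divide_distrib[symmetric] field_simps)
  also have "\<bar>\<dots>\<bar> \<le> real B * (M * M) / (2^n * real B * real B)"
  proof -
    have d: "0 < 2^n * real B * real B" using Bpos by simp
    show ?thesis by (simp only: abs_divide abs_of_pos[OF d]) (rule divide_right_mono[OF db less_imp_le[OF d]])
  qed
  also have "\<dots> = M * M / 2^m" unfolding pmr using Bpos by (simp add: field_simps)
  finally show ?thesis .
qed

lemma offdiag_D:
  assumes nn: "n < n'" and nm: "n' < m" and J: "J \<le> 2^m"
    and u: "\<forall>k\<le>2^n. \<bar>u k\<bar> \<le> M" and v: "\<forall>k\<le>2^n'. \<bar>v k\<bar> \<le> M"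
  shows "\<bar>\<Sum>j<J. D u m n j * D v m n' j\<bar> \<le> M * M / 2^m"
proof -
  define C where "C = (2::nat)^(m-n'-1)"
  define e where "e = n' - n"
  have Cpos: "C > 0" unfolding C_def by simp
  have p1: "(2::nat)^(m-n') = C * 2" unfolding C_def using nm
    by (metis Suc_diff_Suc diff_Suc_1 mult.commute power_Suc zero_less_diff)
  have p2: "(2::nat)^(m-n) = C * 2 * 2^e" unfolding p1[symmetric] e_def using nn nm
    by (simp add: power_add[symmetric])
  have e1: "(2::nat)^e = 2 * 2^(e-1)" unfolding e_def using nn
    by (metis Suc_diff_Suc diff_Suc_1 power_Suc zero_less_diff)
  have p3: "(2::nat)^(m-n-1) = C * 2^e"
  proof -
    have "(2::nat)^(m-n) = 2 * 2^(m-n-1)" using nm nn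
      by (metis Suc_diff_Suc diff_Suc_1 less_trans power_Suc zero_less_diff)
    then show ?thesis using p2 by simp
  qed
  define W :: real where "W = 2 powr (- real n / 2) * 2 powr (- real n' / 2) / (2^(m-n) * 2^(m-n'))"
  define c where "c p = u (p div 2^e) * alt (p div 2^(e-1)) * v p * W" for p
  have eq: "D u m n j * D v m n' j = c (j div C div 2) * alt (j div C)" for j
  proof -
    have d1: "j div 2^(m-n) = j div C div 2 div 2^e" unfolding p2 by (simp add: div_mult2_eq)
    have d2: "j div 2^(m-n-1) = j div C div 2 div 2^(e-1)" unfolding p3 e1 by (simp add: div_mult2_eq)
    have d3: "j div 2^(m-n') = j div C div 2" unfolding p1 by (simp add: div_mult2_eq)
    have d4: "m - n' - 1 = m - n' - 1" ..
    show ?thesis unfolding D_def sg_def d1 d2 d3 c_def W_def alt_def C_def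
      by (simp add: field_simps)
  qed
  have W0: "W \<ge> 0" unfolding W_def by simp
  have "J div C div 2 \<le> 2^n'"
  proof -
    have "J div C div 2 = J div 2^(m-n')" unfolding p1 by (simp add: div_mult2_eq)
    also have "\<dots> \<le> 2^m div 2^(m-n')" using J by (rule div_le_mono)
    also have "\<dots> = 2^n'"
    proof -
      have "(2::nat)^m = 2^n' * 2^(m-n')" using nm by (simp add: power_add[symmetric])
      then show ?thesis by simp
    qed
    finally show ?thesis .
  qed
  moreover have "J div C div 2 div 2^e \<le> 2^n" if "J div C div 2 \<le> 2^n'"
  proof -
    have "J div C div 2 div 2^e \<le> 2^n' div 2^e" using that by (rule div_le_mono)
    also have "\<dots> = 2^n"
    proof -
      have "(2::nat)^n' = 2^n * 2^e" unfolding e_def using nn by (simp add: power_add[symmetric])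
      then show ?thesis by simp
    qed
    finally show ?thesis .
  qed
  ultimately have K: "\<bar>c (J div C div 2)\<bar> \<le> M * M * W"
    unfolding c_def using u v W0
    by (simp add: abs_mult alt_def mult_mono' mult_right_mono order_trans[OF abs_ge_zero])
  have "\<bar>\<Sum>j<J. D u m n j * D v m n' j\<bar> \<le> real C * (M * M * W)"
    unfolding eq by (rule cancel[where c=c, OF Cpos K])
  also have "\<dots> \<le> M * M / 2^m"
  proof -
    have M0: "M * M \<ge> 0" by simp
    have "2 powr (- real n / 2) * 2 powr (- real n' / 2) = (2::real) powr (- ((real n + real n') / 2))"
      unfolding powr_add[symmetric] by (rule arg_cong[where f="\<lambda>x. 2 powr x"]) (simp add: field_simps)
    also have "\<dots> \<le> 2 powr (- real n)" using nn by (intro powr_mono) auto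
    also have "\<dots> = 1 / 2^n" by (simp add: powr_minus powr_realpow divide_inverse)
    finally have pw: "2 powr (- real n / 2) * 2 powr (- real n' / 2) \<le> 1 / (2::real)^n" .
    have r1: "real (2^(m-n')) = 2 * real C" using p1 by (metis mult.commute of_nat_mult of_nat_numeral)
    have r2: "(2::real)^m = 2^n * 2^(m-n)" using nm nn by (simp add: power_add[symmetric])
    have "real C * W = (2 powr (- real n / 2) * 2 powr (- real n' / 2)) / (2 * 2^(m-n))"
      unfolding W_def using r1 Cpos by (simp add: field_simps)
    also have "\<dots> \<le> (1 / 2^n) / (2 * 2^(m-n))" by (rule divide_right_mono[OF pw]) simp
    also have "\<dots> \<le> 1 / 2^m" unfolding r2 by (simp add: field_simps)
    finally have "real C * W \<le> 1 / 2^m" .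
    then have "M * M * (real C * W) \<le> M * M * (1 / 2^m)" using M0 by (rule mult_left_mono)
    then show ?thesis by (simp add: field_simps)
  qed
  finally show ?thesis .
qed


lemma geo2: "(\<Sum>n<m. (2::real)^n) = 2^m - 1"
  by (induction m) auto

lemma toeplitz:
  fixes P :: "nat \<Rightarrow> real"
  assumes P: "P \<longlonglongrightarrow> L"
  shows "(\<lambda>m. \<Sum>n<m. (2^n / 2^m) * P n) \<longlonglongrightarrow> L"
proof -
  have "(\<lambda>n. P n - L) \<longlonglongrightarrow> 0" using P by (simp add: LIMSEQ_iff)
  have "Bseq (\<lambda>n. P n - L)" using P by (intro convergent_imp_Bseq convergent_diff) (auto simp: convergent_def)
  then obtain B where B: "B > 0" "\<And>n. \<bar>P n - L\<bar> \<le> B" by (auto simp: Bseq_def)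
  have lim: "(\<lambda>m. (\<Sum>n<m. (2^n / 2^m) * (P n - L))) \<longlonglongrightarrow> 0"
  proof (rule LIMSEQ_I)
    fix r :: real assume r: "r > 0"
    obtain N where N: "\<And>n. n \<ge> N \<Longrightarrow> \<bar>P n - L\<bar> < r/3"
      using P r unfolding LIMSEQ_iff by (metis real_norm_def zero_less_divide_iff zero_less_numeral)
    have "(\<lambda>m. B * 2^N / 2^m :: real) \<longlonglongrightarrow> 0" by real_asymp
    then obtain N2 where N2: "\<And>m. m \<ge> N2 \<Longrightarrow> B * 2^N / 2^m < r/3"
      using r unfolding LIMSEQ_iff by (metis abs_of_nonneg real_norm_def zero_less_divide_iff zero_less_numeral
          B(1) diff_zero less_imp_le zero_le_divide_iff zero_le_mult_iff zero_le_numeral zero_le_power)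
    show "\<exists>no. \<forall>m\<ge>no. norm ((\<Sum>n<m. (2^n / 2^m) * (P n - L)) - 0) < r"
    proof (intro exI[of _ N2] allI impI)
      fix m assume m: "N2 \<le> m"
      define I where "I n = (if n \<in> {..<N} then B else 0) + r/3" for n
      have pt: "\<bar>(2^n / 2^m) * (P n - L)\<bar> \<le> (2^n / 2^m) * I n" for n
      proof -
        have "\<bar>P n - L\<bar> \<le> I n"
          unfolding I_def using B(2)[of n] N[of n] r by (cases "n < N") auto
        then have "(2^n / 2^m) * \<bar>P n - L\<bar> \<le> (2^n / 2^m) * I n" by (rule mult_left_mono) simp
        then show ?thesis by (simp add: abs_mult)
      qed
      have s1: "\<bar>\<Sum>n<m. (2^n / 2^m) * (P n - L)\<bar> \<le> (\<Sum>n<m. (2^n / 2^m) * I n)"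
        by (rule order.trans[OF sum_abs sum_mono]) (use pt in auto)
      have s2: "(\<Sum>n<m. (2^n / 2^m) * I n) = B / 2^m * (\<Sum>n<m. if n \<in> {..<N} then 2^n else 0) + r/3 * ((\<Sum>n<m. 2^n) / 2^m)"
      proof -
        have pw: "(2^n/2^m) * I n = B/2^m * (if n\<in>{..<N} then 2^n else 0) + r/3 * (2^n/2^m)" for n
          unfolding I_def by (cases "n<N") (simp_all add: field_simps)
        show ?thesis unfolding pw sum.distrib sum_distrib_left[symmetric] sum_divide_distrib[symmetric] ..
      qed
      have s3: "(\<Sum>n<m. if n \<in> {..<N} then (2::real)^n else 0) \<le> 2^N"
      proof -
        have "(\<Sum>n<m. if n \<in> {..<N} then (2::real)^n else 0) = (\<Sum>n\<in>{..<m} \<inter> {..<N}. 2^n)"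
          by (simp add: sum.inter_restrict)
        also have "\<dots> \<le> (\<Sum>n<N. 2^n)" by (intro sum_mono2) auto
        also have "\<dots> \<le> 2^N" unfolding geo2 by simp
        finally show ?thesis .
      qed
      have s4: "(\<Sum>n<m. (2::real)^n) / 2^m \<le> 1" unfolding geo2 by simp
      have "B / 2^m * (\<Sum>n<m. if n \<in> {..<N} then 2^n else 0) \<le> B / 2^m * 2^N"
        using s3 B(1) by (intro mult_left_mono) auto
      also have "\<dots> < r/3" using N2[OF m] by simp
      finally have s5: "B / 2^m * (\<Sum>n<m. if n \<in> {..<N} then 2^n else 0) < r/3" .
      have s6: "r/3 * ((\<Sum>n<m. (2::real)^n) / 2^m) \<le> r/3"
        using mult_left_mono[OF s4, of "r/3"] r by simp
      show "norm ((\<Sum>n<m. (2^n / 2^m) * (P n - L)) - 0) < r"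
        using s1 s2 s5 s6 r unfolding real_norm_def diff_zero by linarith
    qed
  qed
  have "(\<lambda>m. 1 / (2::real)^m) \<longlonglongrightarrow> 0" by real_asymp
  then have "(\<lambda>m. (\<Sum>n<m. (2^n / 2^m) * (P n - L)) + L * (1 - 1 / 2^m)) \<longlonglongrightarrow> 0 + L * (1 - 0)"
    by (intro tendsto_intros lim)
  moreover have "(\<Sum>n<m. (2^n / 2^m) * (P n - L)) + L * (1 - 1 / 2^m) = (\<Sum>n<m. (2^n / 2^m) * P n)" for m
  proof -
    have "(\<Sum>n<m. (2^n / 2^m) * (P n - L)) = (\<Sum>n<m. (2^n / 2^m) * P n) - L * ((\<Sum>n<m. (2::real)^n) / 2^m)"
      by (simp add: right_diff_distrib sum_subtractf sum_distrib_left sum_divide_distrib mult.commute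
          diff_divide_distrib left_diff_distrib)
    also have "(\<Sum>n<m. (2::real)^n) / 2^m = 1 - 1 / 2^m" unfolding geo2 by (simp add: field_simps)
    finally show ?thesis by simp
  qed
  ultimately show ?thesis by simp
qed

lemma cov_conv:
  assumes f: "classF f finf" and g: "classF g ginf" and t: "0 \<le> t" "t \<le> 1"
  shows "(\<lambda>m. cov_n m (xF f) (xF g) t) \<longlonglongrightarrow> integral {0..t} (\<lambda>s. finf s * ginf s)"
proof -
  obtain M1 where M1: "\<forall>n. \<forall>x\<in>{0..1}. \<bar>f n x\<bar> \<le> M1 \<and> \<bar>finf x\<bar> \<le> M1" using classF_bound[OF f] by blast
  obtain M2 where M2: "\<forall>n. \<forall>x\<in>{0..1}. \<bar>g n x\<bar> \<le> M2 \<and> \<bar>ginf x\<bar> \<le> M2" using classF_bound[OF g] by blast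
  define M where "M = max M1 M2"
  define U where "U n k = f n (real k / 2^n)" for n k
  define V where "V n k = g n (real k / 2^n)" for n k
  have pt01: "real k / 2^n \<in> {0..1}" if "k \<le> 2^n" for k n :: nat
  proof -
    have "real k \<le> 2^n" using that by (metis of_nat_le_iff of_nat_numeral of_nat_power)
    then show ?thesis by simp
  qed
  have Ub: "\<forall>k\<le>2^n. \<bar>U n k\<bar> \<le> M" for n
  proof (intro allI impI)
    fix k :: nat assume "k \<le> 2^n"
    then have "\<bar>f n (real k / 2^n)\<bar> \<le> M1" using M1 pt01 by blast
    then show "\<bar>U n k\<bar> \<le> M" unfolding U_def M_def by simp
  qed
  have Vb: "\<forall>k\<le>2^n. \<bar>V n k\<bar> \<le> M" for n
  proof (intro allI impI)
    fix k :: nat assume "k \<le> 2^n"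
    then have "\<bar>g n (real k / 2^n)\<bar> \<le> M2" using M2 pt01 by blast
    then show "\<bar>V n k\<bar> \<le> M" unfolding V_def M_def by simp
  qed
  define P where "P n = (\<Sum>q<Qn n t. U n q * V n q) / 2^n" for n
  have PI: "P \<longlonglongrightarrow> integral {0..t} (\<lambda>s. finf s * ginf s)"
    unfolding P_def U_def V_def using P_conv[OF f g t] .
  define R where "R m = (\<Sum>n<m. (2^n / 2^m) * P n)" for m
  have RI: "R \<longlonglongrightarrow> integral {0..t} (\<lambda>s. finf s * ginf s)"
    unfolding R_def by (rule toeplitz[OF PI])
  have bound: "\<bar>cov_n m (xF f) (xF g) t - R m\<bar> \<le> real m * real m * (M * M / 2^m)" for m
  proof -
    define J where "J = Qn m t"
    have J2: "J \<le> 2^m" unfolding J_def using Qn_facts(2)[OF t] .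
    define T where "T n n' = (\<Sum>j<J. D (U n) m n j * D (V n') m n' j)" for n n'
    have "cov_n m (xF f) (xF g) t = (\<Sum>j<J. (\<Sum>n<m. D (U n) m n j) * (\<Sum>n'<m. D (V n') m n' j))"
      unfolding cov_reindex[OF t] J_def[symmetric]
    proof (rule sum.cong[OF refl])
      fix j assume "j \<in> {..<J}"
      then have j: "j < 2^m" using J2 by simp
      show "(xF f (real (Suc j) / 2^m) - xF f (real j / 2^m)) * (xF g (real (Suc j) / 2^m) - xF g (real j / 2^m))
          = (\<Sum>n<m. D (U n) m n j) * (\<Sum>n'<m. D (V n') m n' j)"
        unfolding incr_xF[OF j] U_def V_def ..
    qed
    also have "\<dots> = (\<Sum>n<m. \<Sum>n'<m. T n n')"
      unfolding T_def sum_product by (simp add: sum.swap[of _ "{..<J}"])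
    finally have cv: "cov_n m (xF f) (xF g) t = (\<Sum>n<m. \<Sum>n'<m. T n n')" .
    have rv: "R m = (\<Sum>n<m. \<Sum>n'<m. if n = n' then (\<Sum>q<Qn n t. U n q * V n q) / 2^m else 0)"
      unfolding R_def P_def by (intro sum.cong) (auto simp: sum.delta)
    have el: "\<bar>T n n' - (if n = n' then (\<Sum>q<Qn n t. U n q * V n q) / 2^m else 0)\<bar> \<le> M * M / 2^m"
      if "n < m" "n' < m" for n n'
    proof (cases "n = n'")
      case True
      then show ?thesis unfolding T_def J_def using diag_D[OF that(1) t Ub Vb] by simp
    next
      case False
      show ?thesis
      proof (cases "n < n'")
        case True
        then show ?thesis unfolding T_def using offdiag_D[OF True that(2) J2 Ub Vb] False by simp
      next
        case False': False
        then have "n' < n" using False by simp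
        from offdiag_D[OF this that(1) J2 Vb Ub] show ?thesis
          unfolding T_def using False by (simp add: mult.commute)
      qed
    qed
    have "\<bar>cov_n m (xF f) (xF g) t - R m\<bar>
        = \<bar>\<Sum>n<m. \<Sum>n'<m. T n n' - (if n = n' then (\<Sum>q<Qn n t. U n q * V n q) / 2^m else 0)\<bar>"
      unfolding cv rv by (simp add: sum_subtractf)
    also have "\<dots> \<le> (\<Sum>n<m. \<Sum>n'<m. M * M / 2^m)"
      by (rule order.trans[OF sum_abs sum_mono], rule order.trans[OF sum_abs sum_mono]) (use el in auto)
    also have "\<dots> = real m * real m * (M * M / 2^m)" by simp
    finally show ?thesis .
  qed
  have "(\<lambda>m. real m * real m * (M * M / 2^m)) \<longlonglongrightarrow> 0" by real_asymp
  then have "(\<lambda>m. cov_n m (xF f) (xF g) t - R m) \<longlonglongrightarrow> 0"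
    by (rule Lim_null_comparison[rotated]) (use bound in auto)
  from tendsto_add[OF this RI] show ?thesis by simp
qed


lemma S_bound:
  assumes M: "\<forall>k<2^n. \<bar>f n (real k / 2^n)\<bar> \<le> M"
  shows "\<bar>S f n t\<bar> \<le> M * 2 powr (- real n / 2)"
proof (cases "\<exists>q<2^n. real q \<le> 2^n * t \<and> 2^n * t \<le> real q + 1")
  case True
  then obtain q where q: "q < 2^n" "real q \<le> 2^n * t" "2^n * t \<le> real q + 1" by blast
  have "S f n t = f n (real q / 2^n) * fs n q t" using S_single[OF q] .
  also have "\<bar>\<dots>\<bar> \<le> M * 2 powr (- real n / 2)"
  proof -
    have e: "0 \<le> e00 x \<and> e00 x \<le> 1" for x by (auto simp: e00_def)
    have "\<bar>fs n q t\<bar> \<le> 2 powr (- real n / 2)"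
      unfolding fs_def using e[of "2 ^ n * t - real q"] by (simp add: abs_mult mult_left_le)
    then show ?thesis using M q(1) by (simp add: abs_mult mult_mono')
  qed
  finally show ?thesis .
next
  case False
  have "S f n t = 0" unfolding S_def
  proof (rule sum.neutral, intro ballI)
    fix k :: nat assume k: "k \<in> {..<2^n}"
    have "2^n * t - real k \<le> 0 \<or> 2^n * t - real k \<ge> 1"
      using False k by (metis lessThan_iff diff_ge_0_iff_ge le_diff_eq add.commute nle_le)
    then show "f n (real k / 2^n) * fs n k t = 0" by (simp add: fs_def e00_zero)
  qed
  moreover have "M \<ge> 0" using M[rule_format, of 0] by simp
  ultimately show ?thesis by simp
qed

lemma S_summable:
  assumes "classF f finf"
  shows "summable (\<lambda>n. S f n t)"
proof -
  obtain M where M: "\<forall>n. \<forall>x\<in>{0..1}. \<bar>f n x\<bar> \<le> M \<and> \<bar>finf x\<bar> \<le> M" using classF_bound[OF assms] by blast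
  have Mk: "\<forall>k<2^n. \<bar>f n (real k / 2^n)\<bar> \<le> M" for n
  proof (intro allI impI)
    fix k :: nat assume "k < 2^n"
    then have "real k / 2^n \<in> {0..1}" using left_in_Iv[of k n] Iv_sub[of k n] by blast
    then show "\<bar>f n (real k / 2^n)\<bar> \<le> M" using M by blast
  qed
  define c :: real where "c = 2 powr (- 1 / 2)"
  have c: "norm c < 1" unfolding c_def by (simp add: powr_minus_divide powr_gt_zero)
  have pw: "2 powr (- real n / 2) = c ^ n" for n
    unfolding c_def by (simp add: powr_realpow[symmetric] powr_powr)
  show ?thesis
  proof (rule summable_comparison_test'[of "\<lambda>n. M * c ^ n" 0])
    show "summable (\<lambda>n. M * c ^ n)" by (intro summable_mult summable_geometric c)
    show "norm (S f n t) \<le> M * c ^ n" for n using S_bound[where f=f and n=n and M=M and t=t, OF Mk[of n]] pw by simp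
  qed
qed

lemma classF_lin:
  assumes f: "classF f finf" and g: "classF g ginf"
  shows "classF (\<lambda>n x. a * f n x + b * g n x) (\<lambda>x. a * finf x + b * ginf x)"
  unfolding classF_def
proof (intro conjI allI)
  obtain M1 where M1: "\<forall>n. \<forall>x\<in>{0..1}. \<bar>f n x\<bar> \<le> M1 \<and> \<bar>finf x\<bar> \<le> M1" using classF_bound[OF f] by blast
  obtain M2 where M2: "\<forall>n. \<forall>x\<in>{0..1}. \<bar>g n x\<bar> \<le> M2 \<and> \<bar>ginf x\<bar> \<le> M2" using classF_bound[OF g] by blast
  fix n
  show "bounded ((\<lambda>x. a * f n x + b * g n x) ` {0..1})"
    unfolding bounded_iff
  proof (intro exI[of _ "\<bar>a\<bar> * M1 + \<bar>b\<bar> * M2"] ballI)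
    fix y assume "y \<in> (\<lambda>x. a * f n x + b * g n x) ` {0..1}"
    then obtain x where x: "x \<in> {0..1}" "y = a * f n x + b * g n x" by blast
    have "\<bar>a * f n x + b * g n x\<bar> \<le> \<bar>a\<bar> * \<bar>f n x\<bar> + \<bar>b\<bar> * \<bar>g n x\<bar>"
      by (metis abs_mult abs_triangle_ineq)
    also have "\<dots> \<le> \<bar>a\<bar> * M1 + \<bar>b\<bar> * M2"
      using M1 M2 x(1) by (intro add_mono mult_left_mono) auto
    finally show "norm y \<le> \<bar>a\<bar> * M1 + \<bar>b\<bar> * M2" using x by simp
  qed
next
  show "uniform_limit {0..1} (\<lambda>n x. a * f n x + b * g n x) (\<lambda>x. a * finf x + b * ginf x) sequentially"
    using f g unfolding classF_def by (intro uniform_limit_intros) auto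
next
  obtain I1 where I1: "\<forall>\<epsilon>>0. \<exists>\<delta>>0. \<forall>D.
      D tagged_division_of {0..1} \<and> (\<lambda>x. ball x \<delta>) fine D \<longrightarrow>
      \<bar>(\<Sum>(x,K)\<in>D. Henstock_Kurzweil_Integration.content K * finf x) - I1\<bar> < \<epsilon>"
    using f unfolding classF_def riemann_integrable_on_def by blast
  obtain I2 where I2: "\<forall>\<epsilon>>0. \<exists>\<delta>>0. \<forall>D.
      D tagged_division_of {0..1} \<and> (\<lambda>x. ball x \<delta>) fine D \<longrightarrow>
      \<bar>(\<Sum>(x,K)\<in>D. Henstock_Kurzweil_Integration.content K * ginf x) - I2\<bar> < \<epsilon>"
    using g unfolding classF_def riemann_integrable_on_def by blast
  show "riemann_integrable_on (\<lambda>x. a * finf x + b * ginf x) 0 1"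
    unfolding riemann_integrable_on_def
  proof (rule exI[of _ "a * I1 + b * I2"], intro allI impI)
    fix \<epsilon> :: real assume e: "\<epsilon> > 0"
    define e' where "e' = \<epsilon> / (2 * (\<bar>a\<bar> + \<bar>b\<bar> + 1))"
    have e': "e' > 0" unfolding e'_def using e by (simp add: add_pos_nonneg)
    obtain d1 where d1: "d1 > 0" "\<forall>D. D tagged_division_of {0..1} \<and> (\<lambda>x. ball x d1) fine D \<longrightarrow>
      \<bar>(\<Sum>(x,K)\<in>D. Henstock_Kurzweil_Integration.content K * finf x) - I1\<bar> < e'" using I1 e' by blast
    obtain d2 where d2: "d2 > 0" "\<forall>D. D tagged_division_of {0..1} \<and> (\<lambda>x. ball x d2) fine D \<longrightarrow>
      \<bar>(\<Sum>(x,K)\<in>D. Henstock_Kurzweil_Integration.content K * ginf x) - I2\<bar> < e'" using I2 e' by blast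
    have "\<exists>\<delta>>0. \<forall>D. D tagged_division_of {0..1} \<and> (\<lambda>x. ball x \<delta>) fine D \<longrightarrow>
      \<bar>(\<Sum>(x,K)\<in>D. Henstock_Kurzweil_Integration.content K * (a * finf x + b * ginf x)) - (a * I1 + b * I2)\<bar> < \<epsilon>"
    proof (intro exI[of _ "min d1 d2"] conjI allI impI)
      show "min d1 d2 > 0" using d1 d2 by simp
      fix D :: "(real \<times> real set) set" assume D: "D tagged_division_of {0..1} \<and> (\<lambda>x. ball x (min d1 d2)) fine D"
      have f1: "(\<lambda>x. ball x d1) fine D" using D unfolding fine_def by force
      have f2: "(\<lambda>x. ball x d2) fine D" using D unfolding fine_def by force
      have A: "\<bar>(\<Sum>(x,K)\<in>D. Henstock_Kurzweil_Integration.content K * finf x) - I1\<bar> < e'" using d1 D f1 by blast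
      have B: "\<bar>(\<Sum>(x,K)\<in>D. Henstock_Kurzweil_Integration.content K * ginf x) - I2\<bar> < e'" using d2 D f2 by blast
      have eq: "(\<Sum>(x,K)\<in>D. Henstock_Kurzweil_Integration.content K * (a * finf x + b * ginf x)) - (a * I1 + b * I2)
          = a * ((\<Sum>(x,K)\<in>D. Henstock_Kurzweil_Integration.content K * finf x) - I1)
            + b * ((\<Sum>(x,K)\<in>D. Henstock_Kurzweil_Integration.content K * ginf x) - I2)"
        by (simp add: sum.distrib sum_distrib_left split_def algebra_simps)
      have "\<bar>a * ((\<Sum>(x,K)\<in>D. Henstock_Kurzweil_Integration.content K * finf x) - I1)
            + b * ((\<Sum>(x,K)\<in>D. Henstock_Kurzweil_Integration.content K * ginf x) - I2)\<bar>
          \<le> \<bar>a\<bar> * e' + \<bar>b\<bar> * e'"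
        using A B by (intro order.trans[OF abs_triangle_ineq] add_mono) (auto simp: abs_mult intro: mult_left_mono)
      also have "\<dots> < \<epsilon>"
      proof -
        have "(\<bar>a\<bar> + \<bar>b\<bar>) * e' < 2 * (\<bar>a\<bar> + \<bar>b\<bar> + 1) * e'" using e' by (intro mult_strict_right_mono) auto
        also have "\<dots> = \<epsilon>" unfolding e'_def by (simp add: add_pos_nonneg)
        finally show ?thesis by (simp add: algebra_simps)
      qed
      finally show "\<bar>(\<Sum>(x,K)\<in>D. Henstock_Kurzweil_Integration.content K * (a * finf x + b * ginf x)) - (a * I1 + b * I2)\<bar> < \<epsilon>"
        unfolding eq .
    qed
    then show "\<exists>\<delta>>0. \<forall>D. D tagged_division_of {0..1} \<and> (\<lambda>x. ball x \<delta>) fine D \<longrightarrow>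
      \<bar>(\<Sum>(x,K)\<in>D. Henstock_Kurzweil_Integration.content K * (a * finf x + b * ginf x)) - (a * I1 + b * I2)\<bar> < \<epsilon>"
      by simp
  qed
qed

lemma xF_lin:
  assumes f: "classF f finf" and g: "classF g ginf"
  shows "xF (\<lambda>n x. a * f n x + b * g n x) t = a * xF f t + b * xF g t"
proof -
  have "S (\<lambda>n x. a * f n x + b * g n x) n t = a * S f n t + b * S g n t" for n
    unfolding S_def by (simp add: sum.distrib sum_distrib_left algebra_simps)
  moreover have "xF (\<lambda>n x. a * f n x + b * g n x) t = (\<Sum>n. S (\<lambda>n x. a * f n x + b * g n x) n t)"
    unfolding xF_def S_def ..
  ultimately have "xF (\<lambda>n x. a * f n x + b * g n x) t = (\<Sum>n. a * S f n t + b * S g n t)"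
    by simp
  also have "\<dots> = a * (\<Sum>n. S f n t) + b * (\<Sum>n. S g n t)"
    using S_summable[OF f, of t] S_summable[OF g, of t]
    by (simp add: suminf_add[symmetric] suminf_mult summable_mult)
  finally show ?thesis unfolding xF_def S_def .
qed

theorem proposition2p4:
  shows "(\<forall>f finf. classF f finf \<longrightarrow>
            (\<forall>t\<in>{0..1}. (\<lambda>n. qv_n n (xF f) t) \<longlonglongrightarrow> integral {0..t} (\<lambda>s. (finf s)\<^sup>2)) \<and>
            continuous_on {0..1} (\<lambda>t. integral {0..t} (\<lambda>s. (finf s)\<^sup>2)))
       \<and> (\<forall>f finf g ginf. classF f finf \<and> classF g ginf \<longrightarrow>
            (\<forall>t\<in>{0..1}. (\<lambda>n. cov_n n (xF f) (xF g) t) \<longlonglongrightarrow> integral {0..t} (\<lambda>s. finf s * ginf s)) \<and>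
            continuous_on {0..1} (\<lambda>t. integral {0..t} (\<lambda>s. finf s * ginf s)))
       \<and> (\<forall>f finf g ginf (a::real) (b::real). classF f finf \<and> classF g ginf \<longrightarrow>
            (\<exists>h hinf. classF h hinf \<and> (\<forall>t\<in>{0..1}. xF h t = a * xF f t + b * xF g t)))"
proof -
  have cont: "continuous_on {0..1} (\<lambda>t. integral {0..t} (\<lambda>s. finf s * ginf s))"
    if f: "classF f finf" and g: "classF g ginf" for f finf g ginf
  proof -
    obtain M1 where M1: "\<forall>n. \<forall>x\<in>{0..1}. \<bar>f n x\<bar> \<le> M1 \<and> \<bar>finf x\<bar> \<le> M1" using classF_bound[OF f] by blast
    obtain M2 where M2: "\<forall>n. \<forall>x\<in>{0..1}. \<bar>g n x\<bar> \<le> M2 \<and> \<bar>ginf x\<bar> \<le> M2" using classF_bound[OF g] by blast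
    have M: "\<forall>x\<in>{0..1}. \<bar>finf x\<bar> \<le> max M1 M2 \<and> \<bar>ginf x\<bar> \<le> max M1 M2" using M1 M2 by force
    have "finf integrable_on {0..1}" "ginf integrable_on {0..1}"
      using riemann_integrable f g unfolding classF_def by auto
    then have "(\<lambda>x. finf x * ginf x) integrable_on {0..1}" using prod_integrable M by blast
    then show ?thesis by (rule indefinite_integral_continuous_1)
  qed
  have cov: "(\<forall>t\<in>{0..1}. (\<lambda>n. cov_n n (xF f) (xF g) t) \<longlonglongrightarrow> integral {0..t} (\<lambda>s. finf s * ginf s)) \<and>
            continuous_on {0..1} (\<lambda>t. integral {0..t} (\<lambda>s. finf s * ginf s))"
    if f: "classF f finf" and g: "classF g ginf" for f finf g ginf
    using cov_conv[OF f g] cont[OF f g] by auto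
  have P1: "\<forall>f finf. classF f finf \<longrightarrow>
            (\<forall>t\<in>{0..1}. (\<lambda>n. qv_n n (xF f) t) \<longlonglongrightarrow> integral {0..t} (\<lambda>s. (finf s)\<^sup>2)) \<and>
            continuous_on {0..1} (\<lambda>t. integral {0..t} (\<lambda>s. (finf s)\<^sup>2))"
  proof (intro allI impI)
    fix f finf assume f: "classF f finf"
    show "(\<forall>t\<in>{0..1}. (\<lambda>n. qv_n n (xF f) t) \<longlonglongrightarrow> integral {0..t} (\<lambda>s. (finf s)\<^sup>2)) \<and>
            continuous_on {0..1} (\<lambda>t. integral {0..t} (\<lambda>s. (finf s)\<^sup>2))"
      using cov[OF f f] unfolding qv_n_def power2_eq_square by simp
  qed
  have P2: "\<forall>f finf g ginf. classF f finf \<and> classF g ginf \<longrightarrow>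
            (\<forall>t\<in>{0..1}. (\<lambda>n. cov_n n (xF f) (xF g) t) \<longlonglongrightarrow> integral {0..t} (\<lambda>s. finf s * ginf s)) \<and>
            continuous_on {0..1} (\<lambda>t. integral {0..t} (\<lambda>s. finf s * ginf s))"
    using cov by blast
  have P3: "\<forall>f finf g ginf (a::real) (b::real). classF f finf \<and> classF g ginf \<longrightarrow>
            (\<exists>h hinf. classF h hinf \<and> (\<forall>t\<in>{0..1}. xF h t = a * xF f t + b * xF g t))"
  proof (intro allI impI)
    fix f finf g ginf and a b :: real assume fg: "classF f finf \<and> classF g ginf"
    show "\<exists>h hinf. classF h hinf \<and> (\<forall>t\<in>{0..1}. xF h t = a * xF f t + b * xF g t)"
      using classF_lin[of f finf g ginf a b] xF_lin[of f finf g ginf a b] fg by blast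
  qed
  show ?thesis using P1 P2 P3 by blast
qed

end
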